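(* Let $X_1,X_2,\ldots$ be i.i.d. non-negative random variables distributed as $X$, with finite mean $\mu>0$. Then for each fixed integer $m\geqslant 2$ and each $i\in\{1,\ldots,m\}$, as $n\to\infty$, \[ \widehat{{}_iIG}_{m;\min}\xrightarrow{\text{a.s.}} IG_{m;\min}\quad\text{and}\quad \widehat{{}^iIG}_{m;\max}\xrightarrow{\text{a.s.}} IG_{m;\max}. \]
   Context: For $n\geqslant m$, based on $X_1,\ldots,X_n$, define \[ \widehat{{}_iIG}_{m;\min}=\frac{(m-1)!}{(n-1)(n-2)\cdots(n-m+1)}\,\frac{\sum_{1\leqslant j_1<\cdots<j_m\leqslant n}\left[X_{j_i}-\min\{X_{j_1},\ldots,X_{j_m}\}\right]}{\sum_{k=1}^n X_k}, \] \[ \widehat{{}^iIG}_{m;\max}=\frac{(m-1)!}{(n-1)(n-2)\cdots(n-m+1)}\,\frac{\sum_{1\leqslant j_1<\cdots<j_m\leqslant n}\left[\max\{X_{j_1},\ldots,X_{j_m}\}-X_{j_i}\right]}{\sum_{k=1}^n X_k}. \] The population quantities are $IG_{m;\min}=\dfrac{\mathbb{E}[X_1-\min\{X_1,\ldots,X_m\}]}{m\mu}$ and $IG_{m;\max}=\dfrac{\mathbb{E}[\max\{X_1,\ldots,X_m\}-X_1]}{m\mu}$. *)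

theory Defs
  imports "HOL-Probability.Probability"
begin

text \<open>For a subset J of {1..n} with m elements, j_1 < ... < j_m are its elements in
  increasing order, so j_i = sorted_list_of_set J ! (i - 1).\<close>

definition coeff_IG :: "nat \<Rightarrow> nat \<Rightarrow> real" where
  "coeff_IG m n = fact (m - 1) / (\<Prod>k = 1..m - 1. (real n - real k))"

definition IG_min_hat :: "nat \<Rightarrow> nat \<Rightarrow> (nat \<Rightarrow> real) \<Rightarrow> nat \<Rightarrow> real" where
  "IG_min_hat m i x n =
     coeff_IG m n *
     ((\<Sum>J \<in> {J. J \<subseteq> {1..n} \<and> card J = m}.
         x (sorted_list_of_set J ! (i - 1)) - Min (x ` J))
      / (\<Sum>k = 1..n. x k))"

definition IG_max_hat :: "nat \<Rightarrow> nat \<Rightarrow> (nat \<Rightarrow> real) \<Rightarrow> nat \<Rightarrow> real" where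
  "IG_max_hat m i x n =
     coeff_IG m n *
     ((\<Sum>J \<in> {J. J \<subseteq> {1..n} \<and> card J = m}.
         Max (x ` J) - x (sorted_list_of_set J ! (i - 1)))
      / (\<Sum>k = 1..n. x k))"

end

theory Submission
  imports Defs "HOL-Real_Asymp.Real_Asymp"
begin


locale iidseq = prob_space +
  fixes X :: "nat \<Rightarrow> 'a \<Rightarrow> real"
  assumes indep: "indep_vars (\<lambda>_. borel) X {1..}"
    and ident: "\<And>k. k \<ge> 1 \<Longrightarrow> distr M borel (X k) = distr M borel (X 1)"
    and nonneg: "\<And>k \<omega>. k \<ge> 1 \<Longrightarrow> 0 \<le> X k \<omega>"
    and integ: "integrable M (X 1)"
begin

abbreviation "D \<equiv> distr M borel (X 1)"

lemma rv[measurable]: "k \<ge> 1 \<Longrightarrow> X k \<in> borel_measurable M"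
  using indep unfolding indep_vars_def by auto

lemma probD: "prob_space D"
  by (rule prob_space_distr) simp

lemma law:
  assumes I: "I \<noteq> {}" "finite I" and inj: "inj_on \<sigma> I" and sub: "\<sigma> ` I \<subseteq> {1..}"
  shows "distr M (PiM I (\<lambda>_. borel)) (\<lambda>\<omega>. \<lambda>l\<in>I. X (\<sigma> l) \<omega>) = PiM I (\<lambda>_. D)"
proof -
  define K where "K = \<sigma> ` I"
  have K: "K \<noteq> {}" "K \<subseteq> {1..}" using I sub by (auto simp: K_def)
  have rvK: "\<And>k. k \<in> K \<Longrightarrow> random_variable borel (X k)" using K by auto
  have "indep_vars (\<lambda>_. borel) X K" using indep_vars_subset[OF indep K(2)] .
  then have d1: "distr M (PiM K (\<lambda>_. borel)) (\<lambda>\<omega>. \<lambda>k\<in>K. X k \<omega>) = PiM K (\<lambda>k. distr M borel (X k))"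
    using indep_vars_iff_distr_eq_PiM'[OF K(1) rvK] by simp
  also have "\<dots> = PiM K (\<lambda>_. D)"
    using K by (intro PiM_cong refl ident) auto
  finally have d1: "distr M (PiM K (\<lambda>_. borel)) (\<lambda>\<omega>. \<lambda>k\<in>K. X k \<omega>) = PiM K (\<lambda>_. D)" .
  have m1: "(\<lambda>\<omega>. \<lambda>k\<in>K. X k \<omega>) \<in> measurable M (PiM K (\<lambda>_. borel))"
    using K by (intro measurable_restrict) auto
  have m2: "(\<lambda>r. \<lambda>l\<in>I. r (\<sigma> l)) \<in> measurable (PiM K (\<lambda>_. borel)) (PiM I (\<lambda>_. borel))"
    by (intro measurable_restrict measurable_component_singleton) (auto simp: K_def)
  have "distr M (PiM I (\<lambda>_. borel)) (\<lambda>\<omega>. \<lambda>l\<in>I. X (\<sigma> l) \<omega>) =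
        distr (distr M (PiM K (\<lambda>_. borel)) (\<lambda>\<omega>. \<lambda>k\<in>K. X k \<omega>)) (PiM I (\<lambda>_. borel)) (\<lambda>r. \<lambda>l\<in>I. r (\<sigma> l))"
    apply (subst distr_distr[OF m2 m1])
    apply (intro distr_cong refl)
    apply (simp add: comp_def)
    apply (intro restrict_ext)
    apply (simp add: K_def)
    done
  also have "\<dots> = distr (PiM K (\<lambda>_. D)) (PiM I (\<lambda>_. D)) (\<lambda>r. \<lambda>l\<in>I. r (\<sigma> l))"
    unfolding d1 by (intro distr_cong refl sets_PiM_cong) simp_all
  also have "\<dots> = PiM I (\<lambda>_. D)"
    using distr_PiM_reindex[of K "\<lambda>_. D" \<sigma> I] probD inj by (auto simp: K_def)
  finally show ?thesis .
qed

end


definition enumJ :: "nat set \<Rightarrow> nat \<Rightarrow> nat" where "enumJ J l = sorted_list_of_set J ! l"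
definition subs :: "nat \<Rightarrow> nat \<Rightarrow> nat set set" where "subs m n = {J. J \<subseteq> {1..n} \<and> card J = m}"

lemma enumJ_inj: "finite J \<Longrightarrow> card J = m \<Longrightarrow> inj_on (enumJ J) {..<m}"
  unfolding enumJ_def by (intro inj_on_nth) auto

lemma enumJ_image: "finite J \<Longrightarrow> card J = m \<Longrightarrow> enumJ J ` {..<m} = J"
  unfolding enumJ_def
  by (metis atLeast0LessThan length_sorted_list_of_set nth_image order_refl set_sorted_list_of_set take_all)

lemma enumJ_in: "finite J \<Longrightarrow> card J = m \<Longrightarrow> l < m \<Longrightarrow> enumJ J l \<in> J"
  using enumJ_image by blast

lemma subs_finite: "finite (subs m n)"
  unfolding subs_def by (rule finite_subset[of _ "Pow {1..n}"]) auto

lemma subs_card: "card (subs m n) = n choose m"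
  unfolding subs_def using n_subsets[of "{1..n}" m] by simp

lemma subs_mem: "J \<in> subs m n \<Longrightarrow> finite J \<and> card J = m \<and> J \<subseteq> {1..n} \<and> J \<subseteq> {1..}"
  unfolding subs_def by (auto intro: finite_subset)

lemma subs_mono: "n \<le> n' \<Longrightarrow> subs m n \<subseteq> subs m n'"
  unfolding subs_def by auto

context iidseq begin

definition vec :: "nat \<Rightarrow> nat set \<Rightarrow> 'a \<Rightarrow> nat \<Rightarrow> real" where
  "vec m J \<omega> = (\<lambda>l\<in>{..<m}. X (enumJ J l) \<omega>)"

definition theta :: "nat \<Rightarrow> ((nat \<Rightarrow> real) \<Rightarrow> real) \<Rightarrow> real" where
  "theta m g = integral\<^sup>L (PiM {..<m} (\<lambda>_. D)) g"

lemma vec_meas[measurable]: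
  assumes "J \<in> subs m n" shows "vec m J \<in> measurable M (PiM {..<m} (\<lambda>_. borel))"
proof -
  have "enumJ J l \<ge> 1" if "l < m" for l using subs_mem[OF assms] enumJ_in[of J m l] that by auto
  then show ?thesis unfolding vec_def by (intro measurable_restrict) auto
qed

lemma vec_nonneg: "J \<in> subs m n \<Longrightarrow> l < m \<Longrightarrow> 0 \<le> vec m J \<omega> l"
proof -
  assume a: "J \<in> subs m n" "l < m"
  then have "enumJ J l \<ge> 1" using subs_mem[OF a(1)] enumJ_in[of J m l] by auto
  then show ?thesis unfolding vec_def using a by (auto intro!: nonneg)
qed

lemma vec_law:
  assumes "J \<in> subs m n" "m \<ge> 1"
  shows "distr M (PiM {..<m} (\<lambda>_. borel)) (vec m J) = PiM {..<m} (\<lambda>_. D)"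
proof -
  have J: "finite J" "card J = m" "J \<subseteq> {1..}" using subs_mem[OF assms(1)] by auto
  show ?thesis unfolding vec_def
    by (rule law) (use assms J enumJ_inj[of J m] enumJ_image[of J m] in auto)
qed

lemma E_vec:
  assumes "J \<in> subs m n" "m \<ge> 1" and g[measurable]: "g \<in> borel_measurable (PiM {..<m} (\<lambda>_. borel))"
  shows "expectation (\<lambda>\<omega>. g (vec m J \<omega>)) = theta m g"
proof -
  have "theta m g = integral\<^sup>L (distr M (PiM {..<m} (\<lambda>_. borel)) (vec m J)) g"
    unfolding theta_def vec_law[OF assms(1,2)] ..
  also have "\<dots> = expectation (\<lambda>\<omega>. g (vec m J \<omega>))"
    using assms by (intro integral_distr) auto
  finally show ?thesis ..
qed

lemma int_vec:
  fixes g :: "(nat \<Rightarrow> real) \<Rightarrow> real"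
  assumes "J \<in> subs m n" "m \<ge> 1" and g[measurable]: "g \<in> borel_measurable (PiM {..<m} (\<lambda>_. borel))"
  shows "integrable M (\<lambda>\<omega>. g (vec m J \<omega>)) \<longleftrightarrow> integrable (PiM {..<m} (\<lambda>_. D)) g"
proof -
  have "integrable (PiM {..<m} (\<lambda>_. D)) g \<longleftrightarrow> integrable (distr M (PiM {..<m} (\<lambda>_. borel)) (vec m J)) g"
    unfolding vec_law[OF assms(1,2)] ..
  also have "\<dots> \<longleftrightarrow> integrable M (\<lambda>\<omega>. g (vec m J \<omega>))"
    using assms by (subst integrable_distr_eq) auto
  finally show ?thesis by simp
qed

end


lemma sandwich_subseq:
  fixes T N :: "nat \<Rightarrow> real" and s :: "nat \<Rightarrow> nat"
  assumes mono: "\<And>a b. a \<le> b \<Longrightarrow> T a \<le> T b" and Tnn: "\<And>n. 0 \<le> T n"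
   and Npos: "\<And>n. n \<ge> s 0 \<Longrightarrow> N n > 0" and Nmono: "\<And>a b. s 0 \<le> a \<Longrightarrow> a \<le> b \<Longrightarrow> N a \<le> N b"
   and s: "strict_mono s"
   and lim: "(\<lambda>k. T (s k) / N (s k)) \<longlonglongrightarrow> \<theta>" and rat: "(\<lambda>k. N (s (Suc k)) / N (s k)) \<longlonglongrightarrow> 1"
  shows "(\<lambda>n. T n / N n) \<longlonglongrightarrow> \<theta>"
proof -
  define \<kappa> where "\<kappa> n = (GREATEST k. s k \<le> n)" for n
  have sle: "y \<le> s y" for y using s by (rule seq_suble)
  have k1: "s (\<kappa> n) \<le> n" if "s 0 \<le> n" for n
    unfolding \<kappa>_def by (rule GreatestI_nat[of _ 0 n]) (use that sle order_trans in auto)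
  have k2: "n < s (Suc (\<kappa> n))" if "s 0 \<le> n" for n
  proof (rule ccontr)
    assume "\<not> n < s (Suc (\<kappa> n))"
    then have "Suc (\<kappa> n) \<le> \<kappa> n"
      unfolding \<kappa>_def by (intro Greatest_le_nat[of _ _ n]) (use sle order_trans in \<open>auto simp: \<kappa>_def\<close>)
    then show False by simp
  qed
  have k3: "k \<le> \<kappa> n" if "s k \<le> n" for k n
    unfolding \<kappa>_def by (rule Greatest_le_nat[of _ _ n]) (use that sle order_trans in auto)
  have kinf: "filterlim \<kappa> at_top sequentially"
    unfolding filterlim_at_top eventually_sequentially using k3 by blast
  define L where "L k = T (s k) / N (s k) * (1 / (N (s (Suc k)) / N (s k)))" for k
  define U where "U k = T (s (Suc k)) / N (s (Suc k)) * (N (s (Suc k)) / N (s k))" for k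
  have "L \<longlonglongrightarrow> \<theta> * (1 / 1)" unfolding L_def
    by (intro tendsto_intros lim rat) simp
  then have L: "(\<lambda>n. L (\<kappa> n)) \<longlonglongrightarrow> \<theta>" using filterlim_compose kinf by fastforce
  have "U \<longlonglongrightarrow> \<theta> * 1" unfolding U_def
    by (intro tendsto_intros rat LIMSEQ_Suc[OF lim])
  then have U: "(\<lambda>n. U (\<kappa> n)) \<longlonglongrightarrow> \<theta>" using filterlim_compose kinf by fastforce
  have sk: "s 0 \<le> s k" for k using s by (simp add: strict_mono_less_eq)
  show ?thesis
  proof (rule tendsto_sandwich[OF _ _ L U])
    show "\<forall>\<^sub>F n in sequentially. L (\<kappa> n) \<le> T n / N n"
      unfolding eventually_sequentially
    proof (intro exI allI impI)
      fix n assume n: "s 0 \<le> n"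
      let ?a = "s (\<kappa> n)" and ?b = "s (Suc (\<kappa> n))"
      have pa: "N ?a > 0" "N ?b > 0" "N n > 0" using Npos sk n by auto
      have "L (\<kappa> n) = T ?a / N ?b" unfolding L_def using pa by (simp add: field_simps)
      also have "\<dots> \<le> T n / N ?b" using mono[OF k1[OF n]] pa by (simp add: divide_right_mono)
      also have "\<dots> \<le> T n / N n" using Nmono[OF n, of ?b] k2[OF n] pa Tnn[of n]
        by (intro divide_left_mono) auto
      finally show "L (\<kappa> n) \<le> T n / N n" .
    qed
    show "\<forall>\<^sub>F n in sequentially. T n / N n \<le> U (\<kappa> n)"
      unfolding eventually_sequentially
    proof (intro exI allI impI)
      fix n assume n: "s 0 \<le> n"
      let ?a = "s (\<kappa> n)" and ?b = "s (Suc (\<kappa> n))"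
      have pa: "N ?a > 0" "N ?b > 0" "N n > 0" using Npos sk n by auto
      have "T n / N n \<le> T ?b / N n" using mono[of n ?b] k2[OF n] pa by (simp add: divide_right_mono)
      also have "\<dots> \<le> T ?b / N ?a" using Nmono[of ?a n] k1[OF n] sk pa Tnn[of ?b]
        by (intro divide_left_mono) auto
      also have "\<dots> = U (\<kappa> n)" unfolding U_def using pa by (simp add: field_simps)
      finally show "T n / N n \<le> U (\<kappa> n)" .
    qed
  qed
qed

lemma binom_ratio:
  assumes m: "m \<ge> 1"
  shows "(\<lambda>k. real ((Suc k + m)^2 choose m) / real ((k + m)^2 choose m)) \<longlonglongrightarrow> 1"
proof -
  have le: "m \<le> (k + m)^2" for k
    by (metis add.commute le_add2 le_trans power2_nat_le_imp_le power2_nat_le_eq_le self_le_power zero_less_numeral nat_le_linear)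
  have eq: "real ((Suc k + m)^2 choose m) / real ((k + m)^2 choose m) =
      (\<Prod>i = 0..<m. ((real (Suc k) + real m)^2 - real i) / ((real k + real m)^2 - real i))" for k
  proof -
    have le2: "m \<le> (Suc k + m)^2" using le[of "Suc k"] by simp
    have "real ((Suc k + m)^2 choose m) / real ((k + m)^2 choose m) =
      (\<Prod>i = 0..<m. real ((Suc k + m)^2 - i) / real (m - i)) / (\<Prod>i = 0..<m. real ((k + m)^2 - i) / real (m - i))"
      using binomial_altdef_of_nat[OF le2, where 'a=real] binomial_altdef_of_nat[OF le[of k], where 'a=real] by simp
    also have "\<dots> = (\<Prod>i = 0..<m. (real ((Suc k + m)^2 - i) / real (m - i)) / (real ((k + m)^2 - i) / real (m - i)))"
      by (rule prod_dividef[symmetric])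
    also have "\<dots> = (\<Prod>i = 0..<m. ((real (Suc k) + real m)^2 - real i) / ((real k + real m)^2 - real i))"
    proof (rule prod.cong[OF refl])
      fix i assume i: "i \<in> {0..<m}"
      have "i \<le> (k+m)^2" "i \<le> (Suc k+m)^2" using i le[of k] le2 by auto
      then show "(real ((Suc k + m)^2 - i) / real (m - i)) / (real ((k + m)^2 - i) / real (m - i)) =
          ((real (Suc k) + real m)^2 - real i) / ((real k + real m)^2 - real i)"
        using i by (simp add: of_nat_diff)
    qed
    finally show ?thesis .
  qed
  have "(\<lambda>k. \<Prod>i = 0..<m. ((real (Suc k) + real m)^2 - real i) / ((real k + real m)^2 - real i)) \<longlonglongrightarrow> (\<Prod>i = 0..<m. 1)"
  proof (rule tendsto_prod)
    fix i assume "i \<in> {0..<m}"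
    show "(\<lambda>k. ((real (Suc k) + real m)^2 - real i) / ((real k + real m)^2 - real i)) \<longlonglongrightarrow> 1"
      by real_asymp
  qed
  then show ?thesis unfolding eq by simp
qed


lemma count_containing:
  assumes j: "j \<in> {1..n}" and m: "m \<ge> 1"
  shows "card {J \<in> subs m n. j \<in> J} = (n - 1) choose (m - 1)"
proof -
  have bij: "bij_betw (\<lambda>J. J - {j}) {J \<in> subs m n. j \<in> J} {B. B \<subseteq> {1..n} - {j} \<and> card B = m - 1}"
  proof (rule bij_betw_byWitness[where f'="insert j"])
    show "\<forall>a\<in>{J \<in> subs m n. j \<in> J}. insert j (a - {j}) = a" by auto
    show "\<forall>a'\<in>{B. B \<subseteq> {1..n} - {j} \<and> card B = m - 1}. insert j a' - {j} = a'" by auto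
    show "(\<lambda>J. J - {j}) ` {J \<in> subs m n. j \<in> J} \<subseteq> {B. B \<subseteq> {1..n} - {j} \<and> card B = m - 1}"
      by (auto simp: subs_def card_Diff_singleton_if intro: finite_subset)
    show "insert j ` {B. B \<subseteq> {1..n} - {j} \<and> card B = m - 1} \<subseteq> {J \<in> subs m n. j \<in> J}"
    proof
      fix x assume "x \<in> insert j ` {B. B \<subseteq> {1..n} - {j} \<and> card B = m - 1}"
      then obtain B where B: "B \<subseteq> {1..n} - {j}" "card B = m - 1" and x: "x = insert j B" by auto
      have "finite B" using B(1) by (rule finite_subset) auto
      moreover have "j \<notin> B" using B(1) by auto
      ultimately have "card (insert j B) = m" using B m by simp
      then show "x \<in> {J \<in> subs m n. j \<in> J}" using B j x by (auto simp: subs_def)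
    qed
  qed
  have "card {J \<in> subs m n. j \<in> J} = card {B. B \<subseteq> {1..n} - {j} \<and> card B = m - 1}"
    using bij_betw_same_card[OF bij] .
  also have "\<dots> = card ({1..n} - {j}) choose (m - 1)" by (rule n_subsets) auto
  also have "card ({1..n} - {j}) = n - 1" using j by simp
  finally show ?thesis .
qed

context iidseq begin

definition Tsum :: "nat \<Rightarrow> ((nat \<Rightarrow> real) \<Rightarrow> real) \<Rightarrow> nat \<Rightarrow> 'a \<Rightarrow> real" where
  "Tsum m g n \<omega> = (\<Sum>J\<in>subs m n. g (vec m J \<omega>))"

lemma subs_m: "{1..m} \<in> subs m m" by (simp add: subs_def)

end

locale bkern = iidseq +
  fixes m :: nat and g :: "(nat \<Rightarrow> real) \<Rightarrow> real" and B :: real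
  assumes m1: "m \<ge> 1" and gm[measurable]: "g \<in> borel_measurable (PiM {..<m} (\<lambda>_. borel))"
    and gb: "\<And>v. (\<And>l. l < m \<Longrightarrow> 0 \<le> v l) \<Longrightarrow> 0 \<le> g v \<and> g v \<le> B"
begin

lemma gJ: "J \<in> subs m n \<Longrightarrow> 0 \<le> g (vec m J \<omega>) \<and> g (vec m J \<omega>) \<le> B"
  by (rule gb) (rule vec_nonneg)

lemma gJ_meas[measurable]: "J \<in> subs m n \<Longrightarrow> (\<lambda>\<omega>. g (vec m J \<omega>)) \<in> borel_measurable M"
  by (rule measurable_compose[OF vec_meas gm])

lemma gJ_int: "J \<in> subs m n \<Longrightarrow> integrable M (\<lambda>\<omega>. g (vec m J \<omega>))"
  by (rule integrable_const_bound[where B=B]) (use gJ in auto)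

lemma EgJ: "J \<in> subs m n \<Longrightarrow> expectation (\<lambda>\<omega>. g (vec m J \<omega>)) = theta m g"
  using E_vec m1 gm by blast

lemma theta_bd: "0 \<le> theta m g \<and> theta m g \<le> B"
  using EgJ[OF subs_m] integral_ge_const[OF gJ_int[OF subs_m]] integral_le_const[OF gJ_int[OF subs_m]] gJ[OF subs_m]
  by auto

lemma indepJ:
  assumes J: "J \<in> subs m n" and J': "J' \<in> subs m n'" and disj: "J \<inter> J' = {}"
  shows "indep_var borel (\<lambda>\<omega>. g (vec m J \<omega>) - c) borel (\<lambda>\<omega>. g (vec m J' \<omega>) - c)"
proof -
  define F where "F K r = g (\<lambda>l\<in>{..<m}. r (enumJ K l)) - c" for K r
  have Fm: "F K \<in> borel_measurable (PiM K (\<lambda>_. borel))" if K: "K \<in> subs m n''" for K n''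
  proof -
    have "(\<lambda>r. \<lambda>l\<in>{..<m}. r (enumJ K l)) \<in> measurable (PiM K (\<lambda>_. borel)) (PiM {..<m} (\<lambda>_. borel))"
      using subs_mem[OF K] enumJ_in[of K m]
      by (intro measurable_restrict measurable_component_singleton) auto
    then show ?thesis unfolding F_def by measurable
  qed
  have iv: "indep_var (PiM J (\<lambda>_. borel)) (\<lambda>\<omega>. restrict (\<lambda>i. X i \<omega>) J) (PiM J' (\<lambda>_. borel)) (\<lambda>\<omega>. restrict (\<lambda>i. X i \<omega>) J')"
    by (rule indep_var_restrict[OF indep disj]) (use subs_mem[OF J] subs_mem[OF J'] in auto)
  have eq: "F K \<circ> (\<lambda>\<omega>. restrict (\<lambda>i. X i \<omega>) K) = (\<lambda>\<omega>. g (vec m K \<omega>) - c)" if K: "K \<in> subs m n''" for K n''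
  proof
    fix \<omega>
    have "(\<lambda>l\<in>{..<m}. restrict (\<lambda>i. X i \<omega>) K (enumJ K l)) = vec m K \<omega>"
      unfolding vec_def using subs_mem[OF K] enumJ_in[of K m] by (intro restrict_ext) auto
    then show "(F K \<circ> (\<lambda>\<omega>. restrict (\<lambda>i. X i \<omega>) K)) \<omega> = g (vec m K \<omega>) - c"
      unfolding F_def by simp
  qed
  show ?thesis using indep_var_compose[OF iv Fm[OF J] Fm[OF J']] eq[OF J] eq[OF J'] by simp
qed

lemma cross:
  assumes J: "J \<in> subs m n" and J': "J' \<in> subs m n"
  shows "expectation (\<lambda>\<omega>. (g (vec m J \<omega>) - theta m g) * (g (vec m J' \<omega>) - theta m g))
          \<le> (if J \<inter> J' = {} then 0 else B\<^sup>2)"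
proof (cases "J \<inter> J' = {}")
  case True
  have iJ: "integrable M (\<lambda>\<omega>. g (vec m K \<omega>) - theta m g)" if "K \<in> subs m n" for K
    using gJ_int[OF that] by simp
  have EZ: "expectation (\<lambda>\<omega>. g (vec m K \<omega>) - theta m g) = 0" if "K \<in> subs m n" for K
    using gJ_int[OF that] EgJ[OF that] by (simp add: prob_space)
  show ?thesis
    using indep_var_lebesgue_integral[OF indepJ[OF J J' True] iJ[OF J] iJ[OF J']] EZ[OF J] EZ[OF J'] True
    by simp
next
  case False
  have bd: "\<bar>g (vec m K \<omega>) - theta m g\<bar> \<le> B" if "K \<in> subs m n" for K \<omega>
    using gJ[OF that, of \<omega>] theta_bd by auto
  have pb: "\<bar>(g (vec m J \<omega>) - theta m g) * (g (vec m J' \<omega>) - theta m g)\<bar> \<le> B\<^sup>2" for \<omega>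
    unfolding abs_mult power2_eq_square by (intro mult_mono bd J J') (use theta_bd in auto)
  have "integrable M (\<lambda>\<omega>. (g (vec m J \<omega>) - theta m g) * (g (vec m J' \<omega>) - theta m g))"
    by (rule integrable_const_bound[where B="B\<^sup>2"]) (use pb J J' in auto)
  then have "expectation (\<lambda>\<omega>. (g (vec m J \<omega>) - theta m g) * (g (vec m J' \<omega>) - theta m g)) \<le> B\<^sup>2"
    by (rule integral_le_const) (use pb abs_le_D1 in blast)
  then show ?thesis using False by simp
qed

end


context bkern begin

lemma ZZ_int:
  assumes "J \<in> subs m n" "J' \<in> subs m n"
  shows "integrable M (\<lambda>\<omega>. (g (vec m J \<omega>) - theta m g) * (g (vec m J' \<omega>) - theta m g))"
proof -
  have bd: "\<bar>g (vec m K \<omega>) - theta m g\<bar> \<le> B" if "K \<in> subs m n" for K \<omega>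
    using gJ[OF that, of \<omega>] theta_bd by auto
  have pb: "\<bar>(g (vec m J \<omega>) - theta m g) * (g (vec m J' \<omega>) - theta m g)\<bar> \<le> B\<^sup>2" for \<omega>
    unfolding abs_mult power2_eq_square by (intro mult_mono bd assms) (use theta_bd in auto)
  show ?thesis
    by (rule integrable_const_bound[where B="B\<^sup>2"]) (use pb assms in auto)
qed

lemma var_bound:
  assumes n: "n \<ge> m"
  shows "expectation (\<lambda>\<omega>. (Tsum m g n \<omega> / real (n choose m) - theta m g)\<^sup>2) \<le> B\<^sup>2 * (real m)\<^sup>2 / real n"
proof -
  define S where "S = subs m n"
  define N where "N = real (n choose m)"
  define \<theta> where "\<theta> = theta m g"
  define Z where "Z J \<omega> = g (vec m J \<omega>) - \<theta>" for J \<omega>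
  define C where "C = real ((n - 1) choose (m - 1))"
  have Npos: "N > 0" using n by (simp add: N_def)
  have npos: "real n > 0" using n m1 by simp
  have cardS: "real (card S) = N" by (simp add: subs_card N_def S_def)
  have fin: "finite S" unfolding S_def by (rule subs_finite)
  have pw: "(Tsum m g n \<omega> / N - \<theta>)\<^sup>2 = (\<Sum>J\<in>S. \<Sum>J'\<in>S. Z J \<omega> * Z J' \<omega>) / N\<^sup>2" for \<omega>
  proof -
    have "(\<Sum>J\<in>S. Z J \<omega>) = Tsum m g n \<omega> - N * \<theta>"
      unfolding Tsum_def Z_def sum_subtractf S_def[symmetric] using cardS by simp
    then have "Tsum m g n \<omega> / N - \<theta> = (\<Sum>J\<in>S. Z J \<omega>) / N"
      using Npos by (simp add: field_simps)
    then show ?thesis by (simp add: power_divide power2_eq_square sum_product)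
  qed
  have iZZ: "integrable M (\<lambda>\<omega>. Z J \<omega> * Z J' \<omega>)" if "J \<in> S" "J' \<in> S" for J J'
    using ZZ_int that unfolding Z_def \<theta>_def S_def by blast
  have E1: "expectation (\<lambda>\<omega>. (Tsum m g n \<omega> / N - \<theta>)\<^sup>2) = (\<Sum>J\<in>S. \<Sum>J'\<in>S. expectation (\<lambda>\<omega>. Z J \<omega> * Z J' \<omega>)) / N\<^sup>2"
  proof -
    have "expectation (\<lambda>\<omega>. \<Sum>J\<in>S. \<Sum>J'\<in>S. Z J \<omega> * Z J' \<omega>) = (\<Sum>J\<in>S. expectation (\<lambda>\<omega>. \<Sum>J'\<in>S. Z J \<omega> * Z J' \<omega>))"
      by (rule Bochner_Integration.integral_sum) (auto intro!: integrable_sum iZZ)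
    also have "\<dots> = (\<Sum>J\<in>S. \<Sum>J'\<in>S. expectation (\<lambda>\<omega>. Z J \<omega> * Z J' \<omega>))"
      by (intro sum.cong refl Bochner_Integration.integral_sum iZZ)
    finally show ?thesis unfolding pw integral_divide_zero by simp
  qed
  have E2: "(\<Sum>J\<in>S. \<Sum>J'\<in>S. expectation (\<lambda>\<omega>. Z J \<omega> * Z J' \<omega>)) \<le> (\<Sum>J\<in>S. \<Sum>J'\<in>S. (if J \<inter> J' = {} then 0 else B\<^sup>2))"
    unfolding Z_def \<theta>_def S_def by (intro sum_mono cross)
  have E3: "(\<Sum>J'\<in>S. (if J \<inter> J' = {} then 0 else B\<^sup>2)) \<le> B\<^sup>2 * real m * C" if J: "J \<in> S" for J
  proof -
    have Jp: "finite J" "card J = m" "J \<subseteq> {1..n}" using subs_mem[of J m n] J by (auto simp: S_def)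
    have "(\<Sum>J'\<in>S. (if J \<inter> J' = {} then 0 else B\<^sup>2)) = (\<Sum>J'\<in>S. (if J \<inter> J' \<noteq> {} then B\<^sup>2 else 0))"
      by (intro sum.cong) auto
    also have "\<dots> = (\<Sum>J'\<in>{J'\<in>S. J \<inter> J' \<noteq> {}}. B\<^sup>2)"
      using sum.inter_filter[OF fin, of "\<lambda>_. B\<^sup>2" "\<lambda>J'. J \<inter> J' \<noteq> {}"] by simp
    also have "\<dots> = B\<^sup>2 * real (card {J'\<in>S. J \<inter> J' \<noteq> {}})" by simp
    also have "card {J'\<in>S. J \<inter> J' \<noteq> {}} \<le> (\<Sum>j\<in>J. card {J'\<in>S. j \<in> J'})"
    proof -
      have "{J'\<in>S. J \<inter> J' \<noteq> {}} = (\<Union>j\<in>J. {J'\<in>S. j \<in> J'})" by auto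
      then show ?thesis using card_UN_le[OF Jp(1), of "\<lambda>j. {J'\<in>S. j \<in> J'}"] by simp
    qed
    also have "(\<Sum>j\<in>J. card {J'\<in>S. j \<in> J'}) = m * ((n - 1) choose (m - 1))"
    proof -
      have "(\<Sum>j\<in>J. card {J'\<in>S. j \<in> J'}) = (\<Sum>j\<in>J. (n - 1) choose (m - 1))"
        unfolding S_def using Jp m1 by (intro sum.cong refl count_containing) auto
      then show ?thesis using Jp by simp
    qed
    finally show ?thesis unfolding C_def
      by (simp add: mult.assoc mult_left_mono)
  qed
  have E4: "(\<Sum>J\<in>S. \<Sum>J'\<in>S. (if J \<inter> J' = {} then 0 else B\<^sup>2)) \<le> N * (B\<^sup>2 * real m * C)"
    using sum_mono[of S _ "\<lambda>_. B\<^sup>2 * real m * C", OF E3] cardS by simp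
  have CN: "C * real n = real m * N"
  proof -
    have "m * (n choose m) = n * ((n - 1) choose (m - 1))" using m1 by (intro times_binomial_minus1_eq) simp
    then have "real m * N = real n * C" unfolding N_def C_def by (metis of_nat_mult)
    then show ?thesis by simp
  qed
  have "expectation (\<lambda>\<omega>. (Tsum m g n \<omega> / N - \<theta>)\<^sup>2) \<le> N * (B\<^sup>2 * real m * C) / N\<^sup>2"
    unfolding E1 using E2 E4 Npos by (intro divide_right_mono) auto
  also have "\<dots> = B\<^sup>2 * real m * C / N" using Npos by (simp add: power2_eq_square)
  also have "\<dots> = B\<^sup>2 * (real m)\<^sup>2 / real n"
    using CN Npos npos by (simp add: field_simps power2_eq_square)
  finally show ?thesis unfolding N_def \<theta>_def .
qed

end


lemma tendsto_from_eventually_inv: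
  fixes u :: "nat \<Rightarrow> real"
  assumes "\<And>r::nat. eventually (\<lambda>k. \<bar>u k - \<theta>\<bar> < 1 / real (Suc r)) sequentially"
  shows "u \<longlonglongrightarrow> \<theta>"
proof (rule tendstoI)
  fix e :: real assume e: "0 < e"
  obtain r :: nat where r: "r > 0" "inverse (real r) < e" using ex_inverse_of_nat_less[OF e] by auto
  have "1 / real (Suc r) \<le> inverse (real r)" using r by (simp add: field_simps)
  then show "\<forall>\<^sub>F k in sequentially. dist (u k) \<theta> < e"
    using assms[of r] r by (auto elim!: eventually_mono simp: dist_real_def)
qed

lemma summable_inv_sq: "summable (\<lambda>k. 1 / (real (Suc k))\<^sup>2)"
proof -
  have "summable (\<lambda>n. inverse (real n ^ 2))" by (rule inverse_power_summable) simp
  then have "summable (\<lambda>n. inverse (real (Suc n) ^ 2))" by (subst summable_Suc_iff)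
  then show ?thesis by (simp add: divide_inverse)
qed

context bkern begin

abbreviation "U n \<omega> \<equiv> Tsum m g n \<omega> / real (n choose m)"

lemma Tsum_meas[measurable]: "(\<lambda>\<omega>. Tsum m g n \<omega>) \<in> borel_measurable M"
  unfolding Tsum_def by (intro borel_measurable_sum gJ_meas)

lemma Tsum_int: "integrable M (\<lambda>\<omega>. Tsum m g n \<omega>)"
  unfolding Tsum_def by (rule Bochner_Integration.integrable_sum) (rule gJ_int)

lemma Tsum_nonneg: "0 \<le> Tsum m g n \<omega>"
  unfolding Tsum_def by (intro sum_nonneg) (use gJ in blast)

lemma Tsum_le: "Tsum m g n \<omega> \<le> real (n choose m) * B"
proof -
  have "Tsum m g n \<omega> \<le> (\<Sum>J\<in>subs m n. B)" unfolding Tsum_def by (intro sum_mono) (use gJ in blast)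
  then show ?thesis by (simp add: subs_card)
qed

lemma Tsum_mono: "n \<le> n' \<Longrightarrow> Tsum m g n \<omega> \<le> Tsum m g n' \<omega>"
  unfolding Tsum_def by (intro sum_mono2 subs_finite subs_mono) (use gJ subs_mono in blast)+

lemma E_U: assumes "n \<ge> m" shows "expectation (U n) = theta m g"
proof -
  have "expectation (\<lambda>\<omega>. Tsum m g n \<omega>) = (\<Sum>J\<in>subs m n. theta m g)"
    unfolding Tsum_def by (subst Bochner_Integration.integral_sum) (auto intro: gJ_int simp: EgJ)
  also have "\<dots> = real (n choose m) * theta m g" by (simp add: subs_card)
  finally show ?thesis using assms by simp
qed

lemma tail_bound:
  assumes n: "n \<ge> m" and e: "e > 0"
  shows "prob {\<omega>\<in>space M. e \<le> \<bar>U n \<omega> - theta m g\<bar>} \<le> B\<^sup>2 * (real m)\<^sup>2 / real n / e\<^sup>2"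
proof -
  have Npos: "real (n choose m) > 0" using n by simp
  have bU: "\<bar>U n \<omega>\<bar> \<le> B" for \<omega>
    using Tsum_le[of n \<omega>] Tsum_nonneg[of n \<omega>] Npos by (simp add: field_simps)
  have B0: "0 \<le> B" using theta_bd by auto
  have "(U n \<omega>)\<^sup>2 \<le> B\<^sup>2" for \<omega>
    using bU[of \<omega>] B0 by (metis abs_le_square_iff abs_of_nonneg)
  then have "\<bar>(U n \<omega>)\<^sup>2\<bar> \<le> B\<^sup>2" for \<omega> by simp
  then have i2: "integrable M (\<lambda>\<omega>. (U n \<omega>)\<^sup>2)"
    by (intro integrable_const_bound[where B="B\<^sup>2"]) auto
  have "prob {\<omega>\<in>space M. e \<le> \<bar>U n \<omega> - expectation (U n)\<bar>} \<le> variance (U n) / e\<^sup>2"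
    by (rule Chebyshev_inequality[OF _ i2 e]) measurable
  then have "prob {\<omega>\<in>space M. e \<le> \<bar>U n \<omega> - theta m g\<bar>} \<le> expectation (\<lambda>\<omega>. (U n \<omega> - theta m g)\<^sup>2) / e\<^sup>2"
    unfolding E_U[OF n] .
  also have "\<dots> \<le> B\<^sup>2 * (real m)\<^sup>2 / real n / e\<^sup>2"
    by (intro divide_right_mono var_bound[OF n]) simp
  finally show ?thesis .
qed

lemma U_sub_conv: "AE \<omega> in M. (\<lambda>k. U ((k + m)\<^sup>2) \<omega>) \<longlonglongrightarrow> theta m g"
proof -
  define s where "s k = (k + m)\<^sup>2" for k
  have sm: "s k \<ge> m" for k
    unfolding s_def power2_eq_square using le_square[of "k+m"] by linarith
  have sk: "real (s k) \<ge> (real (Suc k))\<^sup>2" for k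
    unfolding s_def using m1 by (simp add: power_mono)
  have "AE \<omega> in M. \<forall>r::nat. eventually (\<lambda>k. \<omega> \<in> space M - {\<omega>\<in>space M. 1 / real (Suc r) \<le> \<bar>U (s k) \<omega> - theta m g\<bar>}) sequentially"
  proof (subst AE_all_countable, intro allI borel_cantelli_AE1)
    fix r :: nat and k
    let ?e = "1 / real (Suc r)"
    show "{\<omega>\<in>space M. ?e \<le> \<bar>U (s k) \<omega> - theta m g\<bar>} \<in> sets M" by measurable
    show "emeasure M {\<omega>\<in>space M. ?e \<le> \<bar>U (s k) \<omega> - theta m g\<bar>} < \<infinity>"
      by (simp add: less_top[symmetric])
  next
    fix r :: nat
    let ?e = "1 / real (Suc r)"
    have e: "?e > 0" by simp
    define c where "c = B\<^sup>2 * (real m)\<^sup>2 / ?e\<^sup>2"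
    have c: "c \<ge> 0" unfolding c_def by simp
    show "summable (\<lambda>k. measure M {\<omega>\<in>space M. ?e \<le> \<bar>U (s k) \<omega> - theta m g\<bar>})"
    proof (rule summable_comparison_test'[where g="\<lambda>k. c * (1 / (real (Suc k))\<^sup>2)"])
      show "summable (\<lambda>k. c * (1 / (real (Suc k))\<^sup>2))" by (intro summable_mult summable_inv_sq)
      fix k
      have "measure M {\<omega>\<in>space M. ?e \<le> \<bar>U (s k) \<omega> - theta m g\<bar>} \<le> B\<^sup>2 * (real m)\<^sup>2 / real (s k) / ?e\<^sup>2"
        by (rule tail_bound[OF sm e])
      also have "\<dots> = c * (1 / real (s k))" unfolding c_def by simp
      also have "\<dots> \<le> c * (1 / (real (Suc k))\<^sup>2)"
        using sk[of k] c sm[of k] m1 by (intro mult_left_mono divide_left_mono) (auto intro!: mult_pos_pos)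
      finally show "norm (measure M {\<omega>\<in>space M. ?e \<le> \<bar>U (s k) \<omega> - theta m g\<bar>}) \<le> c * (1 / (real (Suc k))\<^sup>2)"
        by simp
    qed
  qed
  then show ?thesis
  proof (rule AE_mp[OF _ AE_I2], intro impI)
    fix \<omega> assume \<omega>: "\<omega> \<in> space M"
      and ev: "\<forall>r::nat. eventually (\<lambda>k. \<omega> \<in> space M - {\<omega>\<in>space M. 1 / real (Suc r) \<le> \<bar>U (s k) \<omega> - theta m g\<bar>}) sequentially"
    show "(\<lambda>k. U ((k + m)\<^sup>2) \<omega>) \<longlonglongrightarrow> theta m g"
      unfolding s_def[symmetric]
    proof (rule tendsto_from_eventually_inv)
      fix r :: nat
      show "eventually (\<lambda>k. \<bar>U (s k) \<omega> - theta m g\<bar> < 1 / real (Suc r)) sequentially"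
        using ev[rule_format, of r] \<omega> by (auto elim!: eventually_mono)
    qed
  qed
qed

lemma U_conv: "AE \<omega> in M. (\<lambda>n. U n \<omega>) \<longlonglongrightarrow> theta m g"
  using U_sub_conv
proof (rule AE_mp[OF _ AE_I2], intro impI)
  fix \<omega> assume sub: "(\<lambda>k. U ((k + m)\<^sup>2) \<omega>) \<longlonglongrightarrow> theta m g"
  define s where "s k = (k + m)\<^sup>2" for k
  have s0: "s 0 \<ge> m" unfolding s_def power2_eq_square using le_square[of "m"] by simp
  show "(\<lambda>n. U n \<omega>) \<longlonglongrightarrow> theta m g"
  proof (rule sandwich_subseq[where s=s])
    show "\<And>a b. a \<le> b \<Longrightarrow> Tsum m g a \<omega> \<le> Tsum m g b \<omega>" by (rule Tsum_mono)
    show "\<And>n. 0 \<le> Tsum m g n \<omega>" by (rule Tsum_nonneg)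
    show "\<And>n. s 0 \<le> n \<Longrightarrow> 0 < real (n choose m)" using s0 by simp
    show "\<And>a b. s 0 \<le> a \<Longrightarrow> a \<le> b \<Longrightarrow> real (a choose m) \<le> real (b choose m)"
      by (simp add: binomial_right_mono)
    show "strict_mono s" unfolding s_def by (intro strict_monoI power_strict_mono) auto
    show "(\<lambda>k. Tsum m g (s k) \<omega> / real (s k choose m)) \<longlonglongrightarrow> theta m g" using sub by (simp add: s_def)
    show "(\<lambda>k. real (s (Suc k) choose m) / real (s k choose m)) \<longlonglongrightarrow> 1"
      unfolding s_def by (rule binom_ratio[OF m1])
  qed
qed

end


lemma garsia_pw:
  fixes z :: "nat \<Rightarrow> real"
  shows "Max ((\<lambda>j. \<Sum>l<j. z l) ` {..n}) - Max ((\<lambda>j. \<Sum>l<j. z (Suc l)) ` {..n})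
         \<le> z 0 * (if 0 < Max ((\<lambda>j. \<Sum>l<j. z l) ` {..n}) then 1 else 0)"
proof -
  define S where "S j = (\<Sum>l<j. z l)" for j
  define S' where "S' j = (\<Sum>l<j. z (Suc l))" for j
  have fin: "finite ((\<lambda>j. S j) ` {..n})" "finite ((\<lambda>j. S' j) ` {..n})" by auto
  have ne: "(\<lambda>j. S j) ` {..n} \<noteq> {}" "(\<lambda>j. S' j) ` {..n} \<noteq> {}" by auto
  have "S' 0 \<le> Max ((\<lambda>j. S' j) ` {..n})" by (rule Max_ge[OF fin(2)]) auto
  then have M'0: "0 \<le> Max ((\<lambda>j. S' j) ` {..n})" by (simp add: S'_def)
  show ?thesis
  proof (cases "0 < Max ((\<lambda>j. S j) ` {..n})")
    case True
    obtain j where j0: "j \<in> {..n}" and j1: "Max ((\<lambda>j. S j) ` {..n}) = S j"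
      using Max_in[OF fin(1) ne(1)] by blast
    have j: "j \<le> n" "Max ((\<lambda>j. S j) ` {..n}) = S j" using j0 j1 by auto
    have "j \<noteq> 0"
    proof
      assume "j = 0"
      then show False using True j by (simp add: S_def)
    qed
    then obtain j' where j': "j = Suc j'" by (cases j) auto
    have "S j = z 0 + S' j'" unfolding j' S_def S'_def by (rule sum.lessThan_Suc_shift)
    moreover have "S' j' \<le> Max ((\<lambda>j. S' j) ` {..n})" using j j' by (intro Max_ge[OF fin(2)]) auto
    ultimately have key: "Max ((\<lambda>j. S j) ` {..n}) - Max ((\<lambda>j. S' j) ` {..n}) \<le> z 0"
      using j(2) by linarith
    show ?thesis using key True by (simp only: S_def[symmetric] S'_def[symmetric] if_True mult_1_right)
  next
    case False
    then have key: "Max ((\<lambda>j. S j) ` {..n}) - Max ((\<lambda>j. S' j) ` {..n}) \<le> 0" using M'0 by linarith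
    show ?thesis using key False by (simp only: S_def[symmetric] S'_def[symmetric] if_False mult_zero_right)
  qed
qed

lemma garsia_bd:
  fixes z :: "nat \<Rightarrow> real"
  shows "\<bar>Max ((\<lambda>j. \<Sum>l<j. z l) ` {..n})\<bar> \<le> (\<Sum>l<n. \<bar>z l\<bar>)"
proof -
  have "Max ((\<lambda>j. \<Sum>l<j. z l) ` {..n}) \<in> (\<lambda>j. \<Sum>l<j. z l) ` {..n}" by (rule Max_in) auto
  then obtain j where j0: "j \<in> {..n}" and j1: "Max ((\<lambda>j. \<Sum>l<j. z l) ` {..n}) = (\<Sum>l<j. z l)" by blast
  have j: "j \<le> n" "Max ((\<lambda>j. \<Sum>l<j. z l) ` {..n}) = (\<Sum>l<j. z l)" using j0 j1 by auto
  have "\<bar>\<Sum>l<j. z l\<bar> \<le> (\<Sum>l<j. \<bar>z l\<bar>)" by (rule sum_abs)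
  also have "\<dots> \<le> (\<Sum>l<n. \<bar>z l\<bar>)" using j by (intro sum_mono2) auto
  finally show ?thesis using j by simp
qed

context iidseq begin

lemma int_fX:
  fixes f :: "real \<Rightarrow> real"
  assumes f[measurable]: "f \<in> borel_measurable borel" and fi: "integrable M (\<lambda>\<omega>. f (X 1 \<omega>))" and k: "k \<ge> 1"
  shows "integrable M (\<lambda>\<omega>. f (X k \<omega>))"
proof -
  have "integrable (distr M borel (X 1)) f" using fi by (subst integrable_distr_eq) auto
  then have "integrable (distr M borel (X k)) f" using ident[OF k] by simp
  then show ?thesis using k rv[OF k] by (subst (asm) integrable_distr_eq) auto
qed

lemma E_fX:
  fixes f :: "real \<Rightarrow> real"
  assumes f[measurable]: "f \<in> borel_measurable borel" and k: "k \<ge> 1"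
  shows "expectation (\<lambda>\<omega>. f (X k \<omega>)) = expectation (\<lambda>\<omega>. f (X 1 \<omega>))"
proof -
  have "expectation (\<lambda>\<omega>. f (X k \<omega>)) = integral\<^sup>L (distr M borel (X k)) f"
    using rv[OF k] by (subst integral_distr) auto
  also have "\<dots> = integral\<^sup>L (distr M borel (X 1)) f" using ident[OF k] by simp
  also have "\<dots> = expectation (\<lambda>\<omega>. f (X 1 \<omega>))" by (subst integral_distr) auto
  finally show ?thesis .
qed

lemma maximal:
  fixes f :: "real \<Rightarrow> real" and lam :: real
  assumes f[measurable]: "f \<in> borel_measurable borel" and fnn: "\<And>x. 0 \<le> f x"
    and fi: "integrable M (\<lambda>\<omega>. f (X 1 \<omega>))" and lam: "lam > 0"
  shows "prob {\<omega>\<in>space M. \<exists>n. real n * lam < (\<Sum>k=1..n. f (X k \<omega>))} \<le> expectation (\<lambda>\<omega>. f (X 1 \<omega>)) / lam"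
proof -
  define G where "G n v = Max ((\<lambda>j. \<Sum>l<j. (f (v l) - lam)) ` {..n})" for n :: nat and v :: "nat \<Rightarrow> real"
  define V1 where "V1 n \<omega> = (\<lambda>l\<in>{..<n}. X (Suc l) \<omega>)" for n \<omega>
  define V2 where "V2 n \<omega> = (\<lambda>l\<in>{..<n}. X (Suc (Suc l)) \<omega>)" for n \<omega>
  define A where "A n = {\<omega>\<in>space M. \<exists>j\<le>n. real j * lam < (\<Sum>k=1..j. f (X k \<omega>))}" for n
  have comp: "(\<lambda>v. f (v l)) \<in> borel_measurable (PiM {..<n} (\<lambda>_. borel))" if "l < n" for l n
    using that by (intro measurable_compose[OF measurable_component_singleton[where I="{..<n}" and M="\<lambda>_. borel"] f]) auto
  have Gm: "G n \<in> borel_measurable (PiM {..<n} (\<lambda>_. borel))" for n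
    unfolding G_def
    by (intro borel_measurable_Max borel_measurable_sum borel_measurable_diff borel_measurable_const comp) auto
  have V1m: "V1 n \<in> measurable M (PiM {..<n} (\<lambda>_. borel))" for n
    unfolding V1_def by (intro measurable_restrict) auto
  have V2m: "V2 n \<in> measurable M (PiM {..<n} (\<lambda>_. borel))" for n
    unfolding V2_def by (intro measurable_restrict) auto
  have nemp: "{..<n} \<noteq> {}" if "n \<ge> 1" for n :: nat
  proof -
    have "0 \<in> {..<n}" using that by simp
    then show ?thesis by blast
  qed
  have law1: "distr M (PiM {..<n} (\<lambda>_. borel)) (V1 n) = PiM {..<n} (\<lambda>_. D)" if "n \<ge> 1" for n
    unfolding V1_def by (rule law) (use that nemp in \<open>auto simp: inj_on_def\<close>)
  have law2: "distr M (PiM {..<n} (\<lambda>_. borel)) (V2 n) = PiM {..<n} (\<lambda>_. D)" if "n \<ge> 1" for n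
    unfolding V2_def by (rule law) (use that nemp in \<open>auto simp: inj_on_def\<close>)
  define z where "z \<omega> l = f (X (Suc l) \<omega>) - lam" for \<omega> l
  have G1: "G n (V1 n \<omega>) = Max ((\<lambda>j. \<Sum>l<j. z \<omega> l) ` {..n})" for n \<omega>
    unfolding G_def V1_def z_def by (intro arg_cong[where f=Max] image_cong refl sum.cong) auto
  have G2: "G n (V2 n \<omega>) = Max ((\<lambda>j. \<Sum>l<j. z \<omega> (Suc l)) ` {..n})" for n \<omega>
    unfolding G_def V2_def z_def by (intro arg_cong[where f=Max] image_cong refl sum.cong) auto
  have zsum: "(\<Sum>l<j. z \<omega> l) = (\<Sum>k=1..j. f (X k \<omega>)) - real j * lam" for j \<omega>
    unfolding z_def sum_subtractf by (simp add: sum.atLeast1_atMost_eq)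
  have A_eq: "A n = {\<omega>\<in>space M. 0 < G n (V1 n \<omega>)}" for n
  proof -
    have "0 < G n (V1 n \<omega>) \<longleftrightarrow> (\<exists>j\<le>n. real j * lam < (\<Sum>k=1..j. f (X k \<omega>)))" for \<omega>
      unfolding G1 by (subst Max_gr_iff) (auto simp: zsum)
    then show ?thesis unfolding A_def by auto
  qed
  have Am: "A n \<in> sets M" for n unfolding A_eq using Gm V1m by measurable
  have zi: "integrable M (\<lambda>\<omega>. z \<omega> l)" for l
    unfolding z_def using int_fX[OF f fi, of "Suc l"] by simp
  have i1: "integrable M (\<lambda>\<omega>. G n (V1 n \<omega>))" for n
  proof (rule Bochner_Integration.integrable_bound[where f="\<lambda>\<omega>. \<Sum>l<n. \<bar>z \<omega> l\<bar>"])
    show "integrable M (\<lambda>\<omega>. \<Sum>l<n. \<bar>z \<omega> l\<bar>)" using zi by auto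
    show "(\<lambda>\<omega>. G n (V1 n \<omega>)) \<in> borel_measurable M" using Gm V1m by measurable
    show "AE \<omega> in M. norm (G n (V1 n \<omega>)) \<le> norm (\<Sum>l<n. \<bar>z \<omega> l\<bar>)"
      using garsia_bd unfolding G1 by (auto intro!: AE_I2 order_trans[OF _ abs_ge_self])
  qed
  have bound_n: "lam * prob (A n) \<le> expectation (\<lambda>\<omega>. f (X 1 \<omega>))" if n: "n \<ge> 1" for n
  proof -
    have iPi: "integrable (PiM {..<n} (\<lambda>_. D)) (G n)"
      using i1[of n] integrable_distr_eq[OF V1m Gm, of n] law1[OF n] by simp
    have i2: "integrable M (\<lambda>\<omega>. G n (V2 n \<omega>))"
      using iPi integrable_distr_eq[OF V2m Gm, of n] law2[OF n] by simp
    have "expectation (\<lambda>\<omega>. G n (V1 n \<omega>)) = integral\<^sup>L (PiM {..<n} (\<lambda>_. D)) (G n)"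
      using integral_distr[OF V1m Gm, of n] law1[OF n] by simp
    also have "\<dots> = expectation (\<lambda>\<omega>. G n (V2 n \<omega>))"
      using integral_distr[OF V2m Gm, of n] law2[OF n] by simp
    finally have EE: "expectation (\<lambda>\<omega>. G n (V1 n \<omega>)) = expectation (\<lambda>\<omega>. G n (V2 n \<omega>))" .
    have f1: "integrable M (\<lambda>\<omega>. f (X 1 \<omega>))" by (rule fi)
    have iZ: "integrable M (\<lambda>\<omega>. (f (X 1 \<omega>) - lam) * indicator (A n) \<omega>)"
      by (intro integrable_real_mult_indicator Am) (use f1 in auto)
    have "0 = expectation (\<lambda>\<omega>. G n (V1 n \<omega>) - G n (V2 n \<omega>))"
      using EE i1[of n] i2 by simp
    also have "\<dots> \<le> expectation (\<lambda>\<omega>. (f (X 1 \<omega>) - lam) * indicator (A n) \<omega>)"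
    proof (rule integral_mono)
      show "integrable M (\<lambda>\<omega>. G n (V1 n \<omega>) - G n (V2 n \<omega>))" using i1[of n] i2 by simp
      show "integrable M (\<lambda>\<omega>. (f (X 1 \<omega>) - lam) * indicator (A n) \<omega>)" by (rule iZ)
      fix \<omega> assume \<omega>: "\<omega> \<in> space M"
      have "indicator (A n) \<omega> = (if 0 < Max ((\<lambda>j. \<Sum>l<j. z \<omega> l) ` {..n}) then 1 else (0::real))"
        using \<omega> unfolding A_eq G1 by (simp add: indicator_def)
      moreover have "z \<omega> 0 = f (X 1 \<omega>) - lam" by (simp add: z_def)
      ultimately show "G n (V1 n \<omega>) - G n (V2 n \<omega>) \<le> (f (X 1 \<omega>) - lam) * indicator (A n) \<omega>"
        unfolding G1 G2 using garsia_pw[of "z \<omega>" n] by simp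
    qed
    also have "\<dots> = expectation (\<lambda>\<omega>. f (X 1 \<omega>) * indicator (A n) \<omega>) - lam * prob (A n)"
    proof -
      have "(\<lambda>\<omega>. (f (X 1 \<omega>) - lam) * indicator (A n) \<omega>) = (\<lambda>\<omega>. f (X 1 \<omega>) * indicator (A n) \<omega> - lam * indicator (A n) \<omega>)"
        by (auto simp: algebra_simps)
      moreover have "integrable M (\<lambda>\<omega>. f (X 1 \<omega>) * indicator (A n) \<omega>)"
        by (intro integrable_real_mult_indicator Am f1)
      moreover have "integrable M (\<lambda>\<omega>. lam * indicator (A n) \<omega> :: real)"
        using Am[of n] by (intro integrable_mult_right integrable_real_indicator) (auto simp: less_top[symmetric])
      ultimately show ?thesis using Am by (simp add: Bochner_Integration.integral_diff)
    qed
    also have "expectation (\<lambda>\<omega>. f (X 1 \<omega>) * indicator (A n) \<omega>) \<le> expectation (\<lambda>\<omega>. f (X 1 \<omega>))"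
      by (intro integral_mono integrable_real_mult_indicator Am f1) (auto simp: indicator_def fnn)
    finally show ?thesis by simp
  qed
  have inc: "incseq A" unfolding A_def incseq_def by (auto 6 0 intro: order_trans)
  have lim: "(\<lambda>n. prob (A n)) \<longlonglongrightarrow> prob (\<Union>n. A n)"
    by (rule finite_Lim_measure_incseq) (use Am inc in auto)
  have "prob (\<Union>n. A n) \<le> expectation (\<lambda>\<omega>. f (X 1 \<omega>)) / lam"
    by (rule LIMSEQ_le_const2[OF lim]) (use bound_n lam in \<open>auto simp: field_simps mult.commute\<close>)
  moreover have "(\<Union>n. A n) = {\<omega>\<in>space M. \<exists>n. real n * lam < (\<Sum>k=1..n. f (X k \<omega>))}"
    unfolding A_def by auto
  ultimately show ?thesis by simp
qed

end


lemma subs1: "subs 1 n = (\<lambda>k. {k}) ` {1..n}"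
  unfolding subs_def by (auto simp: card_1_singleton_iff)

lemma enumJ_single[simp]: "enumJ {k} 0 = k"
  by (simp add: enumJ_def)


lemma comb_lemma:
  fixes a :: "nat \<Rightarrow> real" and b c :: "nat \<Rightarrow> nat \<Rightarrow> real" and \<mu> :: real and \<mu>K :: "nat \<Rightarrow> real"
  assumes split: "\<And>K n. a n = b K n + c K n" and cnn: "\<And>K n. 0 \<le> c K n"
    and blim: "\<And>K. b K \<longlonglongrightarrow> \<mu>K K" and le: "\<And>K. \<mu>K K \<le> \<mu>" and mlim: "\<mu>K \<longlonglongrightarrow> \<mu>"
    and tail: "\<And>r. \<exists>K. \<forall>n. c K n \<le> 1 / (3 * real (Suc r))"
  shows "a \<longlonglongrightarrow> \<mu>"
proof (rule tendsto_from_eventually_inv)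
  fix r :: nat
  define e where "e = 1 / real (Suc r)"
  have e: "e > 0" by (simp add: e_def)
  have "eventually (\<lambda>K. dist (\<mu>K K) \<mu> < e / 2) sequentially" using mlim e by (intro tendstoD) auto
  then obtain K1 where K1: "dist (\<mu>K K1) \<mu> < e / 2" by (auto simp: eventually_sequentially)
  have ev1: "eventually (\<lambda>n. dist (b K1 n) (\<mu>K K1) < e / 2) sequentially" using blim e by (intro tendstoD) auto
  obtain K2 where K2: "\<And>n. c K2 n \<le> 1 / (3 * real (Suc r))" using tail by blast
  have ev2: "eventually (\<lambda>n. dist (b K2 n) (\<mu>K K2) < e / 3) sequentially" using blim e by (intro tendstoD) auto
  show "eventually (\<lambda>k. \<bar>a k - \<mu>\<bar> < 1 / real (Suc r)) sequentially"
    using ev1 ev2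
  proof eventually_elim
    case (elim n)
    have c2: "c K2 n \<le> e / 3" using K2[of n] by (simp add: e_def mult.commute)
    have d1: "\<bar>b K1 n - \<mu>K K1\<bar> < e / 2" "\<bar>\<mu>K K1 - \<mu>\<bar> < e / 2" using elim(1) K1 by (simp_all add: dist_real_def)
    have lo: "a n > \<mu> - e" using split[of n K1] cnn[of K1 n] d1 by arith
    have d2: "\<bar>b K2 n - \<mu>K K2\<bar> < e / 3" using elim(2) by (simp add: dist_real_def)
    have hi: "a n < \<mu> + e" using split[of n K2] c2 d2 le[of K2] e by arith
    show ?case using lo hi by (simp add: e_def abs_less_iff)
  qed
qed

context iidseq begin

lemma slln_bdd:
  fixes f :: "real \<Rightarrow> real" and K :: real
  assumes f[measurable]: "f \<in> borel_measurable borel" and fnn: "\<And>x. 0 \<le> f x" and K: "K \<ge> 0"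
  shows "AE \<omega> in M. (\<lambda>n. (\<Sum>k=1..n. min (f (X k \<omega>)) K) / real n) \<longlonglongrightarrow> expectation (\<lambda>\<omega>. min (f (X 1 \<omega>)) K)"
proof -
  define g where "g v = min (f (v (0::nat))) K" for v :: "nat \<Rightarrow> real"
  interpret B: bkern M X 1 g K
  proof
    show "1 \<le> (1::nat)" by simp
    show "g \<in> borel_measurable (PiM {..<1} (\<lambda>_. borel))"
      unfolding g_def
      by (intro borel_measurable_min borel_measurable_const
          measurable_compose[OF measurable_component_singleton[where I="{..<1}" and M="\<lambda>_. borel"] f]) auto
    show "0 \<le> g v \<and> g v \<le> K" for v using fnn K by (auto simp: g_def)
  qed
  have T: "Tsum 1 g n \<omega> = (\<Sum>k=1..n. min (f (X k \<omega>)) K)" for n \<omega>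
    unfolding Tsum_def subs1 by (subst sum.reindex) (auto simp: g_def vec_def)
  have th: "theta 1 g = expectation (\<lambda>\<omega>. min (f (X 1 \<omega>)) K)"
  proof -
    have "{1} \<in> subs 1 1" by (simp add: subs_def)
    from B.EgJ[OF this] show ?thesis by (simp add: g_def vec_def)
  qed
  show ?thesis using B.U_conv unfolding T th by simp
qed

lemma slln:
  fixes f :: "real \<Rightarrow> real"
  assumes f[measurable]: "f \<in> borel_measurable borel" and fnn: "\<And>x. 0 \<le> f x"
    and fi: "integrable M (\<lambda>\<omega>. f (X 1 \<omega>))"
  shows "AE \<omega> in M. (\<lambda>n. (\<Sum>k=1..n. f (X k \<omega>)) / real n) \<longlonglongrightarrow> expectation (\<lambda>\<omega>. f (X 1 \<omega>))"
proof -
  define \<mu> where "\<mu> = expectation (\<lambda>\<omega>. f (X 1 \<omega>))"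
  define \<mu>K where "\<mu>K K = expectation (\<lambda>\<omega>. min (f (X 1 \<omega>)) (real K))" for K :: nat
  define h where "h K x = max (f x - real K) 0" for K :: nat and x
  have hm[measurable]: "h K \<in> borel_measurable borel" for K unfolding h_def by measurable
  have hnn: "0 \<le> h K x" for K x by (simp add: h_def)
  have hi: "integrable M (\<lambda>\<omega>. h K (X 1 \<omega>))" for K
    by (rule Bochner_Integration.integrable_bound[OF fi]) (auto simp: h_def fnn)
  have mi: "integrable M (\<lambda>\<omega>. min (f (X 1 \<omega>)) (real K))" for K
    by (rule Bochner_Integration.integrable_bound[OF fi]) (auto simp: fnn)
  have split: "f x = min (f x) (real K) + h K x" for K x by (auto simp: h_def)
  have Eh: "expectation (\<lambda>\<omega>. h K (X 1 \<omega>)) = \<mu> - \<mu>K K" for K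
  proof -
    have "\<mu> = expectation (\<lambda>\<omega>. min (f (X 1 \<omega>)) (real K) + h K (X 1 \<omega>))"
      unfolding \<mu>_def by (subst split[of _ K]) simp
    also have "\<dots> = \<mu>K K + expectation (\<lambda>\<omega>. h K (X 1 \<omega>))"
      unfolding \<mu>K_def by (rule Bochner_Integration.integral_add[OF mi hi])
    finally show ?thesis by simp
  qed
  have le: "\<mu>K K \<le> \<mu>" for K
    using Eh[of K] integral_nonneg_AE[of "\<lambda>\<omega>. h K (X 1 \<omega>)" M] hnn by simp
  have mlim: "\<mu>K \<longlonglongrightarrow> \<mu>"
    unfolding \<mu>K_def \<mu>_def
  proof (rule integral_dominated_convergence[where w="\<lambda>\<omega>. f (X 1 \<omega>)"])
    show "(\<lambda>\<omega>. f (X 1 \<omega>)) \<in> borel_measurable M" by simp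
    show "(\<lambda>\<omega>. min (f (X 1 \<omega>)) (real K)) \<in> borel_measurable M" for K by simp
    show "integrable M (\<lambda>\<omega>. f (X 1 \<omega>))" by (rule fi)
    show "AE \<omega> in M. norm (min (f (X 1 \<omega>)) (real K)) \<le> f (X 1 \<omega>)" for K
      using fnn by (auto intro!: AE_I2)
    show "AE \<omega> in M. (\<lambda>K. min (f (X 1 \<omega>)) (real K)) \<longlonglongrightarrow> f (X 1 \<omega>)"
    proof (rule AE_I2)
      fix \<omega>
      obtain K0 :: nat where "f (X 1 \<omega>) \<le> real K0" using real_arch_simple by blast
      then have "eventually (\<lambda>K. min (f (X 1 \<omega>)) (real K) = f (X 1 \<omega>)) sequentially"
        unfolding eventually_sequentially by (intro exI[of _ K0]) auto
      then show "(\<lambda>K. min (f (X 1 \<omega>)) (real K)) \<longlonglongrightarrow> f (X 1 \<omega>)" by (rule tendsto_eventually)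
    qed
  qed
  have AE1: "AE \<omega> in M. \<forall>K::nat. (\<lambda>n. (\<Sum>k=1..n. min (f (X k \<omega>)) (real K)) / real n) \<longlonglongrightarrow> \<mu>K K"
    unfolding AE_all_countable \<mu>K_def using slln_bdd[OF f fnn] by simp
  have AE2: "AE \<omega> in M. \<forall>r::nat. \<exists>K::nat. \<forall>n. (\<Sum>k=1..n. h K (X k \<omega>)) \<le> real n * (1 / (3 * real (Suc r)))"
    unfolding AE_all_countable
  proof
    fix r :: nat
    define lam where "lam = 1 / (3 * real (Suc r))"
    have lam: "lam > 0" by (simp add: lam_def)
    define Bs where "Bs K = {\<omega>\<in>space M. \<exists>n. real n * lam < (\<Sum>k=1..n. h K (X k \<omega>))}" for K
    have Bm: "Bs K \<in> sets M" for K unfolding Bs_def by measurable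
    have Bp: "prob (Bs K) \<le> (\<mu> - \<mu>K K) / lam" for K
      using maximal[OF hm hnn hi lam, of K] Eh[of K] unfolding Bs_def by simp
    define N where "N = (\<Inter>K. Bs K)"
    have Nm: "N \<in> sets M" unfolding N_def using Bm by auto
    have "prob N \<le> (\<mu> - \<mu>K K) / lam" for K
      using finite_measure_mono[of N "Bs K"] Bp[of K] Bm unfolding N_def by fastforce
    moreover have "(\<lambda>K. (\<mu> - \<mu>K K) / lam) \<longlonglongrightarrow> (\<mu> - \<mu>) / lam"
      using lam by (intro tendsto_intros mlim) auto
    ultimately have "prob N \<le> 0"
      by (intro LIMSEQ_le_const[where X="\<lambda>K. (\<mu> - \<mu>K K) / lam"]) auto
    then have "emeasure M N = 0" using Nm by (simp add: emeasure_eq_measure measure_nonneg antisym)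
    then show "AE \<omega> in M. \<exists>K::nat. \<forall>n. (\<Sum>k=1..n. h K (X k \<omega>)) \<le> real n * (1 / (3 * real (Suc r)))"
      by (intro AE_I[OF _ _ Nm]) (auto simp: N_def Bs_def lam_def not_le)
  qed
  show ?thesis using AE1 AE2
  proof eventually_elim
    case (elim \<omega>)
    show ?case unfolding \<mu>_def[symmetric]
    proof (rule comb_lemma[where b="\<lambda>K n. (\<Sum>k=1..n. min (f (X k \<omega>)) (real K)) / real n"
          and c="\<lambda>K n. (\<Sum>k=1..n. h K (X k \<omega>)) / real n" and \<mu>K=\<mu>K])
      show "(\<Sum>k=1..n. f (X k \<omega>)) / real n = (\<Sum>k=1..n. min (f (X k \<omega>)) (real K)) / real n + (\<Sum>k=1..n. h K (X k \<omega>)) / real n" for K n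
        by (subst split[of _ K]) (simp add: sum.distrib add_divide_distrib)
      show "0 \<le> (\<Sum>k=1..n. h K (X k \<omega>)) / real n" for K n
        by (intro divide_nonneg_nonneg sum_nonneg hnn) simp
      show "(\<lambda>n. (\<Sum>k=1..n. min (f (X k \<omega>)) (real K)) / real n) \<longlonglongrightarrow> \<mu>K K" for K
        using elim(1) by blast
      show "\<mu>K K \<le> \<mu>" for K by (rule le)
      show "\<mu>K \<longlonglongrightarrow> \<mu>" by (rule mlim)
      show "\<exists>K. \<forall>n. (\<Sum>k=1..n. h K (X k \<omega>)) / real n \<le> 1 / (3 * real (Suc r))" for r
      proof -
        obtain K where K: "\<And>n. (\<Sum>k=1..n. h K (X k \<omega>)) \<le> real n * (1 / (3 * real (Suc r)))"
          using elim(2) by blast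
        have "(\<Sum>k=1..n. h K (X k \<omega>)) / real n \<le> 1 / (3 * real (Suc r))" for n
        proof (cases "n = 0")
          case False
          then show ?thesis using K[of n] by (simp add: divide_le_eq mult.commute)
        qed simp
        then show ?thesis by blast
      qed
    qed
  qed
qed

end


lemma comb2_lemma:
  fixes a :: "nat \<Rightarrow> real" and b c d :: "nat \<Rightarrow> nat \<Rightarrow> real" and \<mu> :: real and \<mu>K \<tau> :: "nat \<Rightarrow> real"
  assumes split: "\<And>K n. a n = b K n + c K n" and cnn: "\<And>K n. 0 \<le> c K n" and cd: "\<And>K n. c K n \<le> d K n"
    and blim: "\<And>K. b K \<longlonglongrightarrow> \<mu>K K" and le: "\<And>K. \<mu>K K \<le> \<mu>" and mlim: "\<mu>K \<longlonglongrightarrow> \<mu>"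
    and dlim: "\<And>K. d K \<longlonglongrightarrow> \<tau> K" and tlim: "\<tau> \<longlonglongrightarrow> 0"
  shows "a \<longlonglongrightarrow> \<mu>"
proof (rule tendsto_from_eventually_inv)
  fix r :: nat
  define e where "e = 1 / real (Suc r)"
  have e: "e > 0" by (simp add: e_def)
  have "eventually (\<lambda>K. dist (\<mu>K K) \<mu> < e / 2) sequentially" using mlim e by (intro tendstoD) auto
  then obtain K1 where K1: "dist (\<mu>K K1) \<mu> < e / 2" by (auto simp: eventually_sequentially)
  have ev1: "eventually (\<lambda>n. dist (b K1 n) (\<mu>K K1) < e / 2) sequentially" using blim e by (intro tendstoD) auto
  have "eventually (\<lambda>K. dist (\<tau> K) 0 < e / 3) sequentially" using tlim e by (intro tendstoD) auto
  then obtain K2 where K2: "dist (\<tau> K2) 0 < e / 3" by (auto simp: eventually_sequentially)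
  have ev2: "eventually (\<lambda>n. dist (b K2 n) (\<mu>K K2) < e / 3) sequentially" using blim e by (intro tendstoD) auto
  have ev3: "eventually (\<lambda>n. dist (d K2 n) (\<tau> K2) < e / 3) sequentially" using dlim e by (intro tendstoD) auto
  show "eventually (\<lambda>k. \<bar>a k - \<mu>\<bar> < 1 / real (Suc r)) sequentially"
    using ev1 ev2 ev3
  proof eventually_elim
    case (elim n)
    have d1: "\<bar>b K1 n - \<mu>K K1\<bar> < e / 2" "\<bar>\<mu>K K1 - \<mu>\<bar> < e / 2" using elim(1) K1 by (simp_all add: dist_real_def)
    have lo: "a n > \<mu> - e" using split[of n K1] cnn[of K1 n] d1 by arith
    have d2: "\<bar>b K2 n - \<mu>K K2\<bar> < e / 3" "\<bar>d K2 n - \<tau> K2\<bar> < e / 3" "\<bar>\<tau> K2\<bar> < e / 3"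
      using elim(2,3) K2 by (simp_all add: dist_real_def)
    have hi: "a n < \<mu> + e" using split[of n K2] cd[of K2 n] d2 le[of K2] e by arith
    show ?case using lo hi by (simp add: e_def abs_less_iff)
  qed
qed

lemma double_count:
  fixes a :: "nat \<Rightarrow> real"
  assumes m: "m \<ge> 1"
  shows "(\<Sum>J\<in>subs m n. \<Sum>j\<in>J. a j) = real ((n - 1) choose (m - 1)) * (\<Sum>j=1..n. a j)"
proof -
  have "(\<Sum>J\<in>subs m n. \<Sum>j\<in>J. a j) = (\<Sum>J\<in>subs m n. \<Sum>j\<in>{1..n}. if j \<in> J then a j else 0)"
  proof (rule sum.cong[OF refl])
    fix J assume J: "J \<in> subs m n"
    have "J = {j\<in>{1..n}. j \<in> J}" using subs_mem[OF J] by auto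
    then have "(\<Sum>j\<in>J. a j) = (\<Sum>j\<in>{j\<in>{1..n}. j \<in> J}. a j)" by simp
    also have "\<dots> = (\<Sum>j\<in>{1..n}. if j \<in> J then a j else 0)" by (rule sum.inter_filter) simp
    finally show "(\<Sum>j\<in>J. a j) = (\<Sum>j\<in>{1..n}. if j \<in> J then a j else 0)" .
  qed
  also have "\<dots> = (\<Sum>j\<in>{1..n}. \<Sum>J\<in>subs m n. if j \<in> J then a j else 0)" by (rule sum.swap)
  also have "\<dots> = (\<Sum>j\<in>{1..n}. a j * real (card {J\<in>subs m n. j \<in> J}))"
  proof (rule sum.cong[OF refl])
    fix j
    have "(\<Sum>J\<in>subs m n. if j \<in> J then a j else 0) = (\<Sum>J\<in>{J\<in>subs m n. j \<in> J}. a j)"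
      using sum.inter_filter[OF subs_finite[of m n], of "\<lambda>_. a j" "\<lambda>J. j \<in> J"] by simp
    then show "(\<Sum>J\<in>subs m n. if j \<in> J then a j else 0) = a j * real (card {J\<in>subs m n. j \<in> J})" by simp
  qed
  also have "\<dots> = (\<Sum>j\<in>{1..n}. a j * real ((n - 1) choose (m - 1)))"
    using count_containing[OF _ m] by (intro sum.cong refl) simp
  finally show ?thesis by (simp add: sum_distrib_right mult.commute)
qed

context iidseq begin

lemma vec_sum:
  assumes J: "J \<in> subs m n"
  shows "(\<Sum>l<m. h (vec m J \<omega> l)) = (\<Sum>j\<in>J. h (X j \<omega>))"
proof -
  have Jp: "finite J" "card J = m" using subs_mem[OF J] by auto
  have bij: "bij_betw (enumJ J) {..<m} J" unfolding bij_betw_def using enumJ_inj[OF Jp] enumJ_image[OF Jp] by simp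
  have "(\<Sum>l<m. h (vec m J \<omega> l)) = (\<Sum>l<m. h (X (enumJ J l) \<omega>))" by (simp add: vec_def)
  also have "\<dots> = (\<Sum>j\<in>J. h (X j \<omega>))" by (rule sum.reindex_bij_betw[OF bij])
  finally show ?thesis .
qed

lemma ustat_slln:
  fixes m :: nat and g :: "(nat \<Rightarrow> real) \<Rightarrow> real"
  assumes m1: "m \<ge> 1" and gm[measurable]: "g \<in> borel_measurable (PiM {..<m} (\<lambda>_. borel))"
    and gdom: "\<And>v. (\<And>l. l < m \<Longrightarrow> 0 \<le> v l) \<Longrightarrow> 0 \<le> g v \<and> g v \<le> (\<Sum>l<m. v l)"
  shows "AE \<omega> in M. (\<lambda>n. Tsum m g n \<omega> / real (n choose m)) \<longlonglongrightarrow> theta m g"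
proof -
  define gK where "gK K v = min (g v) (real K)" for K :: nat and v
  define hK where "hK K x = max (x - real K / real m) 0" for K :: nat and x :: real
  define \<theta>K where "\<theta>K K = theta m (gK K)" for K
  define \<tau> where "\<tau> K = real m * expectation (\<lambda>\<omega>. hK K (X 1 \<omega>))" for K
  have gKm[measurable]: "gK K \<in> borel_measurable (PiM {..<m} (\<lambda>_. borel))" for K
    unfolding gK_def by measurable
  have hKm[measurable]: "hK K \<in> borel_measurable borel" for K unfolding hK_def by measurable
  have hKnn: "0 \<le> hK K x" for K x by (simp add: hK_def)
  have hKi: "integrable M (\<lambda>\<omega>. hK K (X 1 \<omega>))" for K
  proof (rule Bochner_Integration.integrable_bound[OF integ])
    have c0: "0 \<le> real K / real m" by simp
    have "\<bar>hK K x\<bar> \<le> \<bar>x\<bar>" for x using c0 unfolding hK_def by linarith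
    then show "AE \<omega> in M. norm (hK K (X 1 \<omega>)) \<le> norm (X 1 \<omega>)" by simp
  qed simp
  interpret BK: bkern M X m "gK K" "real K" for K
  proof
    show "1 \<le> m" by (rule m1)
    show "gK K \<in> borel_measurable (PiM {..<m} (\<lambda>_. borel))" by (rule gKm)
    show "0 \<le> gK K v \<and> gK K v \<le> real K" if "\<And>l. l < m \<Longrightarrow> 0 \<le> v l" for v
      using gdom[OF that] by (auto simp: gK_def)
  qed
  define J0 where "J0 = {1..m}"
  have J0: "J0 \<in> subs m m" unfolding J0_def by (rule subs_m)
  have gJ0m: "(\<lambda>\<omega>. g (vec m J0 \<omega>)) \<in> borel_measurable M" using vec_meas[OF J0] by measurable
  have domJ0: "0 \<le> g (vec m J0 \<omega>) \<and> g (vec m J0 \<omega>) \<le> (\<Sum>j\<in>J0. X j \<omega>)" for \<omega>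
    using gdom[of "vec m J0 \<omega>"] vec_nonneg[OF J0] vec_sum[OF J0, of "\<lambda>x. x"] by simp
  have iX: "integrable M (\<lambda>\<omega>. \<Sum>j\<in>J0. X j \<omega>)"
    using int_fX[of "\<lambda>x. x"] integ by (intro Bochner_Integration.integrable_sum) (auto simp: J0_def)
  have th: "theta m g = expectation (\<lambda>\<omega>. g (vec m J0 \<omega>))" using E_vec[OF J0 m1 gm] by simp
  have thK: "\<theta>K K = expectation (\<lambda>\<omega>. gK K (vec m J0 \<omega>))" for K unfolding \<theta>K_def using E_vec[OF J0 m1 gKm] by simp
  have le: "\<theta>K K \<le> theta m g" for K
    unfolding thK th
  proof (rule integral_mono)
    show "integrable M (\<lambda>\<omega>. gK K (vec m J0 \<omega>))" by (rule BK.gJ_int[OF J0])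
    show "integrable M (\<lambda>\<omega>. g (vec m J0 \<omega>))"
    proof (rule Bochner_Integration.integrable_bound[OF iX gJ0m])
      have "norm (g (vec m J0 \<omega>)) \<le> norm (\<Sum>j\<in>J0. X j \<omega>)" for \<omega>
        using domJ0[of \<omega>] by (simp add: abs_of_nonneg order_trans[OF _ abs_ge_self])
      then show "AE \<omega> in M. norm (g (vec m J0 \<omega>)) \<le> norm (\<Sum>j\<in>J0. X j \<omega>)" by simp
    qed
  qed (auto simp: gK_def)
  have mlim: "\<theta>K \<longlonglongrightarrow> theta m g"
    unfolding thK th
  proof (rule integral_dominated_convergence[where w="\<lambda>\<omega>. \<Sum>j\<in>J0. X j \<omega>"])
    show "(\<lambda>\<omega>. g (vec m J0 \<omega>)) \<in> borel_measurable M" by (rule gJ0m)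
    show "(\<lambda>\<omega>. gK K (vec m J0 \<omega>)) \<in> borel_measurable M" for K using vec_meas[OF J0] by measurable
    show "integrable M (\<lambda>\<omega>. \<Sum>j\<in>J0. X j \<omega>)" by (rule iX)
    show "AE \<omega> in M. norm (gK K (vec m J0 \<omega>)) \<le> (\<Sum>j\<in>J0. X j \<omega>)" for K
    proof (rule AE_I2)
      fix \<omega> show "norm (gK K (vec m J0 \<omega>)) \<le> (\<Sum>j\<in>J0. X j \<omega>)"
        using domJ0[of \<omega>] unfolding gK_def by (simp add: min_def)
    qed
    show "AE \<omega> in M. (\<lambda>K. gK K (vec m J0 \<omega>)) \<longlonglongrightarrow> g (vec m J0 \<omega>)"
    proof (rule AE_I2)
      fix \<omega>
      obtain K0 :: nat where "g (vec m J0 \<omega>) \<le> real K0" using real_arch_simple by blast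
      then have "eventually (\<lambda>K. gK K (vec m J0 \<omega>) = g (vec m J0 \<omega>)) sequentially"
        unfolding eventually_sequentially gK_def by (intro exI[of _ K0]) auto
      then show "(\<lambda>K. gK K (vec m J0 \<omega>)) \<longlonglongrightarrow> g (vec m J0 \<omega>)" by (rule tendsto_eventually)
    qed
  qed
  have tlim: "\<tau> \<longlonglongrightarrow> 0"
  proof -
    have "(\<lambda>K. expectation (\<lambda>\<omega>. hK K (X 1 \<omega>))) \<longlonglongrightarrow> expectation (\<lambda>\<omega>. 0::real)"
    proof (rule integral_dominated_convergence[where w="\<lambda>\<omega>. X 1 \<omega>"])
      show "integrable M (X 1)" by (rule integ)
      show "AE \<omega> in M. norm (hK K (X 1 \<omega>)) \<le> X 1 \<omega>" for K
        using nonneg[of 1] by (auto intro!: AE_I2 simp: hK_def)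
      show "AE \<omega> in M. (\<lambda>K. hK K (X 1 \<omega>)) \<longlonglongrightarrow> 0"
      proof (rule AE_I2)
        fix \<omega>
        obtain K0 :: nat where K0: "real m * X 1 \<omega> \<le> real K0" using real_arch_simple by blast
        have "hK K (X 1 \<omega>) = 0" if "K \<ge> K0" for K
        proof -
          have "real m * X 1 \<omega> \<le> real K" using K0 that by linarith
          then have "X 1 \<omega> \<le> real K / real m" using m1 by (simp add: field_simps)
          then show ?thesis by (simp add: hK_def)
        qed
        then have "eventually (\<lambda>K. hK K (X 1 \<omega>) = 0) sequentially"
          unfolding eventually_sequentially by blast
        then show "(\<lambda>K. hK K (X 1 \<omega>)) \<longlonglongrightarrow> 0" by (rule tendsto_eventually)
      qed
    qed simp_all
    then have "(\<lambda>K. real m * expectation (\<lambda>\<omega>. hK K (X 1 \<omega>))) \<longlonglongrightarrow> real m * 0"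
      by (intro tendsto_intros) simp
    moreover have "\<tau> = (\<lambda>K. real m * expectation (\<lambda>\<omega>. hK K (X 1 \<omega>)))" by (simp add: fun_eq_iff \<tau>_def)
    ultimately show ?thesis by simp
  qed
  have AE1: "AE \<omega> in M. \<forall>K::nat. (\<lambda>n. Tsum m (gK K) n \<omega> / real (n choose m)) \<longlonglongrightarrow> \<theta>K K"
    unfolding AE_all_countable \<theta>K_def using BK.U_conv by blast
  have AE2: "AE \<omega> in M. \<forall>K::nat. (\<lambda>n. (\<Sum>k=1..n. hK K (X k \<omega>)) / real n) \<longlonglongrightarrow> expectation (\<lambda>\<omega>. hK K (X 1 \<omega>))"
    unfolding AE_all_countable using slln[OF hKm hKnn hKi] by blast
  have pw: "g v - gK K v \<le> (\<Sum>l<m. hK K (v l))" if v: "\<And>l. l < m \<Longrightarrow> 0 \<le> v l" for v K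
  proof (cases "g v \<le> real K")
    case True
    then show ?thesis using hKnn by (simp add: gK_def sum_nonneg)
  next
    case False
    have "g v - gK K v = g v - real K" using False by (simp add: gK_def)
    also have "\<dots> \<le> (\<Sum>l<m. v l) - real K" using gdom[OF v] by simp
    also have "\<dots> = (\<Sum>l<m. (v l - real K / real m))" using m1 by (simp add: sum_subtractf)
    also have "\<dots> \<le> (\<Sum>l<m. hK K (v l))" by (intro sum_mono) (simp add: hK_def)
    finally show ?thesis .
  qed
  show ?thesis using AE1 AE2
  proof eventually_elim
    case (elim \<omega>)
    define N where "N n = real (n choose m)" for n
    show ?case
    proof (rule comb2_lemma[where b="\<lambda>K n. Tsum m (gK K) n \<omega> / N n"
          and c="\<lambda>K n. Tsum m g n \<omega> / N n - Tsum m (gK K) n \<omega> / N n"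
          and d="\<lambda>K n. real m * ((\<Sum>k=1..n. hK K (X k \<omega>)) / real n)"
          and \<mu>K=\<theta>K and \<tau>=\<tau>])
      show "Tsum m g n \<omega> / real (n choose m) = Tsum m (gK K) n \<omega> / N n + (Tsum m g n \<omega> / N n - Tsum m (gK K) n \<omega> / N n)" for K n
        by (simp add: N_def)
      have Tle: "Tsum m (gK K) n \<omega> \<le> Tsum m g n \<omega>" for K n
        unfolding Tsum_def by (intro sum_mono) (simp add: gK_def)
      show "0 \<le> Tsum m g n \<omega> / N n - Tsum m (gK K) n \<omega> / N n" for K n
        using Tle[of K n] by (simp add: N_def diff_divide_distrib[symmetric] divide_nonneg_nonneg)
      show "Tsum m g n \<omega> / N n - Tsum m (gK K) n \<omega> / N n \<le> real m * ((\<Sum>k=1..n. hK K (X k \<omega>)) / real n)" for K n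
      proof (cases "n \<ge> m")
        case False
        then have "N n = 0" by (simp add: N_def)
        then show ?thesis using hKnn by (simp add: sum_nonneg)
      next
        case True
        have Npos: "N n > 0" using True by (simp add: N_def)
        have npos: "real n > 0" using True m1 by simp
        have "Tsum m g n \<omega> - Tsum m (gK K) n \<omega> = (\<Sum>J\<in>subs m n. g (vec m J \<omega>) - gK K (vec m J \<omega>))"
          unfolding Tsum_def by (simp add: sum_subtractf)
        also have "\<dots> \<le> (\<Sum>J\<in>subs m n. \<Sum>j\<in>J. hK K (X j \<omega>))"
        proof (rule sum_mono)
          fix J assume J: "J \<in> subs m n"
          show "g (vec m J \<omega>) - gK K (vec m J \<omega>) \<le> (\<Sum>j\<in>J. hK K (X j \<omega>))"
            using pw[of "vec m J \<omega>" K] vec_nonneg[OF J] vec_sum[OF J, of "hK K"] by simp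
        qed
        also have "\<dots> = real ((n - 1) choose (m - 1)) * (\<Sum>j=1..n. hK K (X j \<omega>))"
          by (rule double_count[OF m1])
        finally have A: "Tsum m g n \<omega> - Tsum m (gK K) n \<omega> \<le> real ((n - 1) choose (m - 1)) * (\<Sum>j=1..n. hK K (X j \<omega>))" .
        have CN: "real ((n - 1) choose (m - 1)) * real n = real m * N n"
        proof -
          have "m * (n choose m) = n * ((n - 1) choose (m - 1))" using m1 by (intro times_binomial_minus1_eq) simp
          then show ?thesis unfolding N_def by (metis of_nat_mult mult.commute)
        qed
        have "Tsum m g n \<omega> / N n - Tsum m (gK K) n \<omega> / N n = (Tsum m g n \<omega> - Tsum m (gK K) n \<omega>) / N n"
          by (simp add: diff_divide_distrib)
        also have "\<dots> \<le> real ((n - 1) choose (m - 1)) * (\<Sum>j=1..n. hK K (X j \<omega>)) / N n"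
          using A Npos by (simp add: divide_right_mono)
        also have "\<dots> = real m * ((\<Sum>k=1..n. hK K (X k \<omega>)) / real n)"
          using CN Npos npos by (simp add: field_simps)
        finally show ?thesis .
      qed
      show "(\<lambda>n. Tsum m (gK K) n \<omega> / N n) \<longlonglongrightarrow> \<theta>K K" for K using elim(1) by (simp add: N_def)
      show "\<theta>K K \<le> theta m g" for K by (rule le)
      show "\<theta>K \<longlonglongrightarrow> theta m g" by (rule mlim)
      show "(\<lambda>n. real m * ((\<Sum>k=1..n. hK K (X k \<omega>)) / real n)) \<longlonglongrightarrow> \<tau> K" for K
        unfolding \<tau>_def using elim(2) by (intro tendsto_intros) blast
      show "\<tau> \<longlonglongrightarrow> 0" by (rule tlim)
    qed
  qed
qed

end


lemma coeff_binom:
  assumes m: "m \<ge> 1" and n: "n \<ge> m"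
  shows "coeff_IG m n * real (n choose m) = real n / real m"
proof -
  define P where "P = (\<Prod>k = 1..m - 1. real n - real k)"
  have "real (n choose m) * fact m = (\<Prod>i = 0..<m. real n - real i)"
    using gbinomial_mult_fact'[of "real n" m] by (simp add: binomial_gbinomial)
  also have "\<dots> = (real n - real 0) * (\<Prod>i = Suc 0..<m. real n - real i)"
    using m by (subst prod.atLeast_Suc_lessThan) auto
  also have "{Suc 0..<m} = {1..m - 1}" using m by auto
  finally have B: "real (n choose m) * fact m = real n * P" unfolding P_def by simp
  have Pnz: "P \<noteq> 0" unfolding P_def using n by (auto simp: prod_zero_iff)
  have fm: "(fact m :: real) = real m * fact (m - 1)" using m by (metis fact_reduce not_one_le_zero of_nat_eq_0_iff zero_less_iff_neq_zero)
  have fpos: "(fact (m - 1) :: real) > 0" by simp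
  have "coeff_IG m n * real (n choose m) = fact (m - 1) / P * real (n choose m)"
    unfolding coeff_IG_def P_def by simp
  also have "\<dots> = fact (m - 1) * (real n * P / fact m) / P"
    using B by (simp add: field_simps)
  also have "\<dots> = real n / real m" using Pnz fm fpos m by (simp add: field_simps)
  finally show ?thesis .
qed

context iidseq begin

lemma E_sigma:
  assumes I: "m \<ge> 1" and inj: "inj_on \<sigma> {..<m}" and sub: "\<sigma> ` {..<m} \<subseteq> {1..}"
    and F[measurable]: "F \<in> borel_measurable (PiM {..<m} (\<lambda>_. borel))"
  shows "expectation (\<lambda>\<omega>. F (\<lambda>l\<in>{..<m}. X (\<sigma> l) \<omega>)) = theta m F"
proof -
  have ne: "{..<m} \<noteq> {}" using I by (metis lessThan_iff less_one equals0D not_less le_less_trans zero_less_one)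
  have meas: "(\<lambda>\<omega>. \<lambda>l\<in>{..<m}. X (\<sigma> l) \<omega>) \<in> measurable M (PiM {..<m} (\<lambda>_. borel))"
    using sub by (intro measurable_restrict) auto
  have "theta m F = integral\<^sup>L (distr M (PiM {..<m} (\<lambda>_. borel)) (\<lambda>\<omega>. \<lambda>l\<in>{..<m}. X (\<sigma> l) \<omega>)) F"
    unfolding theta_def law[OF ne finite_lessThan inj sub] ..
  also have "\<dots> = expectation (\<lambda>\<omega>. F (\<lambda>l\<in>{..<m}. X (\<sigma> l) \<omega>))"
    by (rule integral_distr[OF meas F])
  finally show ?thesis ..
qed

lemma main_locale:
  fixes m i :: nat
  assumes m: "m \<ge> 2" and i: "i \<in> {1..m}" and mu: "expectation (X 1) > 0"
  shows "(AE \<omega> in M. (\<lambda>n. IG_min_hat m i (\<lambda>k. X k \<omega>) n) \<longlonglongrightarrow>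
            expectation (\<lambda>\<omega>. X 1 \<omega> - Min ((\<lambda>k. X k \<omega>) ` {1..m}))
              / (real m * expectation (X 1))) \<and>
         (AE \<omega> in M. (\<lambda>n. IG_max_hat m i (\<lambda>k. X k \<omega>) n) \<longlonglongrightarrow>
            expectation (\<lambda>\<omega>. Max ((\<lambda>k. X k \<omega>) ` {1..m}) - X 1 \<omega>)
              / (real m * expectation (X 1)))"
proof -
  have m1: "m \<ge> 1" using m by simp
  have il: "i - 1 < m" using i by auto
  define hmin where "hmin v = v (i - 1) - Min ((\<lambda>l. v l) ` {..<m})" for v :: "nat \<Rightarrow> real"
  define hmax where "hmax v = Max ((\<lambda>l. v l) ` {..<m}) - v (i - 1)" for v :: "nat \<Rightarrow> real"
  have comp: "(\<lambda>v. v l) \<in> borel_measurable (PiM {..<m} (\<lambda>_. borel))" if "l < m" for l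
    using that by (intro measurable_component_singleton[where I="{..<m}" and M="\<lambda>_. borel", simplified]) auto
  have hminm[measurable]: "hmin \<in> borel_measurable (PiM {..<m} (\<lambda>_. borel))"
    unfolding hmin_def by (intro borel_measurable_diff borel_measurable_Min comp il) auto
  have hmaxm[measurable]: "hmax \<in> borel_measurable (PiM {..<m} (\<lambda>_. borel))"
    unfolding hmax_def by (intro borel_measurable_diff borel_measurable_Max comp il) auto
  have finne: "finite ((\<lambda>l. v l) ` {..<m})" "(\<lambda>l. v l) ` {..<m} \<noteq> {}" for v :: "nat \<Rightarrow> real"
    using il by auto
  have vin: "v (i - 1) \<in> (\<lambda>l. v l) ` {..<m}" for v :: "nat \<Rightarrow> real" using il by auto
  have sumge: "v l \<le> (\<Sum>l<m. v l)" if "\<And>l. l < m \<Longrightarrow> 0 \<le> v l" "l < m" for v :: "nat \<Rightarrow> real" and l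
    using that by (intro member_le_sum) auto
  have dmin: "0 \<le> hmin v \<and> hmin v \<le> (\<Sum>l<m. v l)" if v: "\<And>l. l < m \<Longrightarrow> 0 \<le> v l" for v
  proof -
    have "Min ((\<lambda>l. v l) ` {..<m}) \<le> v (i - 1)" by (rule Min_le[OF finne(1) vin])
    moreover have "0 \<le> Min ((\<lambda>l. v l) ` {..<m})" using v finne by (subst Min_ge_iff) auto
    moreover have "v (i - 1) \<le> (\<Sum>l<m. v l)" by (rule sumge[OF v il])
    ultimately show ?thesis unfolding hmin_def by linarith
  qed
  have dmax: "0 \<le> hmax v \<and> hmax v \<le> (\<Sum>l<m. v l)" if v: "\<And>l. l < m \<Longrightarrow> 0 \<le> v l" for v
  proof -
    have "v (i - 1) \<le> Max ((\<lambda>l. v l) ` {..<m})" by (rule Max_ge[OF finne(1) vin])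
    moreover have "Max ((\<lambda>l. v l) ` {..<m}) \<le> (\<Sum>l<m. v l)"
    proof (subst Max_le_iff[OF finne])
      show "\<forall>a\<in>(\<lambda>l. v l) ` {..<m}. a \<le> (\<Sum>l<m. v l)"
        using v by (auto intro!: member_le_sum)
    qed
    moreover have "0 \<le> v (i - 1)" using v il by simp
    ultimately show ?thesis unfolding hmax_def by linarith
  qed
  (* the permutation moving position i-1 to index 1 *)
  define \<sigma> where "\<sigma> l = (if l = 0 then i else if l = i - 1 then 1 else Suc l)" for l
  have \<sigma>i: "\<sigma> (i - 1) = 1" using i by (auto simp: \<sigma>_def)
  have \<sigma>inj: "inj_on \<sigma> {..<m}" using i unfolding \<sigma>_def inj_on_def by auto
  have \<sigma>sub: "\<sigma> ` {..<m} \<subseteq> {1..m}" using i unfolding \<sigma>_def by auto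
  have \<sigma>sub': "\<sigma> ` {..<m} \<subseteq> {1..}" using \<sigma>sub by auto
  have \<sigma>img: "\<sigma> ` {..<m} = {1..m}"
    by (rule card_subset_eq[OF _ \<sigma>sub]) (use card_image[OF \<sigma>inj] in auto)
  have restr_img: "(\<lambda>l. (\<lambda>l\<in>{..<m}. X (\<sigma> l) \<omega>) l) ` {..<m} = (\<lambda>k. X k \<omega>) ` {1..m}" for \<omega>
  proof -
    have "(\<lambda>l. (\<lambda>l\<in>{..<m}. X (\<sigma> l) \<omega>) l) ` {..<m} = (\<lambda>l. X (\<sigma> l) \<omega>) ` {..<m}" by auto
    also have "\<dots> = (\<lambda>k. X k \<omega>) ` (\<sigma> ` {..<m})" by (simp add: image_image)
    finally show ?thesis unfolding \<sigma>img .
  qed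
  have thmin: "theta m hmin = expectation (\<lambda>\<omega>. X 1 \<omega> - Min ((\<lambda>k. X k \<omega>) ` {1..m}))"
    using E_sigma[OF m1 \<sigma>inj \<sigma>sub' hminm] il \<sigma>i unfolding hmin_def restr_img by auto
  have thmax: "theta m hmax = expectation (\<lambda>\<omega>. Max ((\<lambda>k. X k \<omega>) ` {1..m}) - X 1 \<omega>)"
    using E_sigma[OF m1 \<sigma>inj \<sigma>sub' hmaxm] il \<sigma>i unfolding hmax_def restr_img by auto
  have vimg: "(\<lambda>l. vec m J \<omega> l) ` {..<m} = (\<lambda>k. X k \<omega>) ` J" if J: "J \<in> subs m n" for J n \<omega>
  proof -
    have Jp: "finite J" "card J = m" using subs_mem[OF J] by auto
    have "(\<lambda>l. vec m J \<omega> l) ` {..<m} = (\<lambda>l. X (enumJ J l) \<omega>) ` {..<m}" by (auto simp: vec_def)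
    also have "\<dots> = (\<lambda>k. X k \<omega>) ` (enumJ J ` {..<m})" by (simp add: image_image)
    finally show ?thesis unfolding enumJ_image[OF Jp] .
  qed
  have vi: "vec m J \<omega> (i - 1) = X (sorted_list_of_set J ! (i - 1)) \<omega>" for J \<omega>
    using il by (simp add: vec_def enumJ_def)
  define S where "S n \<omega> = (\<Sum>k=1..n. X k \<omega>)" for n \<omega>
  have IGmin: "IG_min_hat m i (\<lambda>k. X k \<omega>) n = (Tsum m hmin n \<omega> / real (n choose m)) / (real m * (S n \<omega> / real n))"
    if n: "n \<ge> m" for n \<omega>
  proof -
    have T: "(\<Sum>J\<in>{J. J \<subseteq> {1..n} \<and> card J = m}. X (sorted_list_of_set J ! (i - 1)) \<omega> - Min ((\<lambda>k. X k \<omega>) ` J)) = Tsum m hmin n \<omega>"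
      unfolding Tsum_def subs_def[symmetric] hmin_def by (intro sum.cong refl) (simp add: vi[simplified] vimg)
    have Np: "real (n choose m) > 0" using n by simp
    have np: "real n > 0" using n m1 by simp
    have "IG_min_hat m i (\<lambda>k. X k \<omega>) n = coeff_IG m n * (Tsum m hmin n \<omega> / S n \<omega>)"
      unfolding IG_min_hat_def T S_def ..
    also have "\<dots> = (coeff_IG m n * real (n choose m)) * (Tsum m hmin n \<omega> / real (n choose m)) / S n \<omega>"
      using Np by simp
    also have "\<dots> = (Tsum m hmin n \<omega> / real (n choose m)) / (real m * (S n \<omega> / real n))"
      unfolding coeff_binom[OF m1 n] using np m1 by (simp add: field_simps)
    finally show ?thesis .
  qed
  have IGmax: "IG_max_hat m i (\<lambda>k. X k \<omega>) n = (Tsum m hmax n \<omega> / real (n choose m)) / (real m * (S n \<omega> / real n))"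
    if n: "n \<ge> m" for n \<omega>
  proof -
    have T: "(\<Sum>J\<in>{J. J \<subseteq> {1..n} \<and> card J = m}. Max ((\<lambda>k. X k \<omega>) ` J) - X (sorted_list_of_set J ! (i - 1)) \<omega>) = Tsum m hmax n \<omega>"
      unfolding Tsum_def subs_def[symmetric] hmax_def by (intro sum.cong refl) (simp add: vi[simplified] vimg)
    have Np: "real (n choose m) > 0" using n by simp
    have np: "real n > 0" using n m1 by simp
    have "IG_max_hat m i (\<lambda>k. X k \<omega>) n = coeff_IG m n * (Tsum m hmax n \<omega> / S n \<omega>)"
      unfolding IG_max_hat_def T S_def ..
    also have "\<dots> = (coeff_IG m n * real (n choose m)) * (Tsum m hmax n \<omega> / real (n choose m)) / S n \<omega>"
      using Np by simp
    also have "\<dots> = (Tsum m hmax n \<omega> / real (n choose m)) / (real m * (S n \<omega> / real n))"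
      unfolding coeff_binom[OF m1 n] using np m1 by (simp add: field_simps)
    finally show ?thesis .
  qed
  have Smu: "AE \<omega> in M. (\<lambda>n. S n \<omega> / real n) \<longlonglongrightarrow> expectation (X 1)"
  proof -
    have "AE \<omega> in M. (\<lambda>n. (\<Sum>k=1..n. max (X k \<omega>) 0) / real n) \<longlonglongrightarrow> expectation (\<lambda>\<omega>. max (X 1 \<omega>) 0)"
      by (rule slln) (use integ in \<open>auto intro: Bochner_Integration.integrable_bound\<close>)
    moreover have "(\<Sum>k=1..n. max (X k \<omega>) 0) = (\<Sum>k=1..n. X k \<omega>)" for n \<omega>
      by (intro sum.cong refl) (use nonneg in auto)
    moreover have "expectation (\<lambda>\<omega>. max (X 1 \<omega>) 0) = expectation (X 1)"
      using nonneg[of 1] by (intro Bochner_Integration.integral_cong) auto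
    ultimately show ?thesis unfolding S_def by simp
  qed
  have Umin: "AE \<omega> in M. (\<lambda>n. Tsum m hmin n \<omega> / real (n choose m)) \<longlonglongrightarrow> theta m hmin"
    by (rule ustat_slln[OF m1 hminm dmin])
  have Umax: "AE \<omega> in M. (\<lambda>n. Tsum m hmax n \<omega> / real (n choose m)) \<longlonglongrightarrow> theta m hmax"
    by (rule ustat_slln[OF m1 hmaxm dmax])
  have den: "real m * expectation (X 1) \<noteq> 0" using mu m1 by simp
  show ?thesis
  proof
    show "AE \<omega> in M. (\<lambda>n. IG_min_hat m i (\<lambda>k. X k \<omega>) n) \<longlonglongrightarrow>
            expectation (\<lambda>\<omega>. X 1 \<omega> - Min ((\<lambda>k. X k \<omega>) ` {1..m})) / (real m * expectation (X 1))"
      using Umin Smu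
    proof eventually_elim
      case (elim \<omega>)
      have "(\<lambda>n. (Tsum m hmin n \<omega> / real (n choose m)) / (real m * (S n \<omega> / real n))) \<longlonglongrightarrow>
              theta m hmin / (real m * expectation (X 1))"
        using elim den by (intro tendsto_intros) auto
      moreover have "eventually (\<lambda>n. (Tsum m hmin n \<omega> / real (n choose m)) / (real m * (S n \<omega> / real n)) =
              IG_min_hat m i (\<lambda>k. X k \<omega>) n) sequentially"
        unfolding eventually_sequentially using IGmin[symmetric] by blast
      ultimately show ?case unfolding thmin by (rule Lim_transform_eventually)
    qed
    show "AE \<omega> in M. (\<lambda>n. IG_max_hat m i (\<lambda>k. X k \<omega>) n) \<longlonglongrightarrow>
            expectation (\<lambda>\<omega>. Max ((\<lambda>k. X k \<omega>) ` {1..m}) - X 1 \<omega>) / (real m * expectation (X 1))"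
      using Umax Smu
    proof eventually_elim
      case (elim \<omega>)
      have "(\<lambda>n. (Tsum m hmax n \<omega> / real (n choose m)) / (real m * (S n \<omega> / real n))) \<longlonglongrightarrow>
              theta m hmax / (real m * expectation (X 1))"
        using elim den by (intro tendsto_intros) auto
      moreover have "eventually (\<lambda>n. (Tsum m hmax n \<omega> / real (n choose m)) / (real m * (S n \<omega> / real n)) =
              IG_max_hat m i (\<lambda>k. X k \<omega>) n) sequentially"
        unfolding eventually_sequentially using IGmax[symmetric] by blast
      ultimately show ?case unfolding thmax by (rule Lim_transform_eventually)
    qed
  qed
qed

end


theorem proposition3p3:
  fixes M :: "'a measure" and X :: "nat \<Rightarrow> 'a \<Rightarrow> real" and m i :: nat
  assumes "prob_space M"
    and "prob_space.indep_vars M (\<lambda>_. borel) X {1..}"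
    and "\<And>k. k \<ge> 1 \<Longrightarrow> distr M borel (X k) = distr M borel (X 1)"
    and "\<And>k. k \<ge> 1 \<Longrightarrow> AE \<omega> in M. X k \<omega> \<ge> 0"
    and "integrable M (X 1)"
    and "prob_space.expectation M (X 1) > 0"
    and "m \<ge> 2" and "i \<in> {1..m}"
  shows "(AE \<omega> in M. (\<lambda>n. IG_min_hat m i (\<lambda>k. X k \<omega>) n) \<longlonglongrightarrow>
            prob_space.expectation M (\<lambda>\<omega>. X 1 \<omega> - Min ((\<lambda>k. X k \<omega>) ` {1..m}))
              / (real m * prob_space.expectation M (X 1))) \<and>
         (AE \<omega> in M. (\<lambda>n. IG_max_hat m i (\<lambda>k. X k \<omega>) n) \<longlonglongrightarrow>
            prob_space.expectation M (\<lambda>\<omega>. Max ((\<lambda>k. X k \<omega>) ` {1..m}) - X 1 \<omega>)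
              / (real m * prob_space.expectation M (X 1)))"
proof -
  interpret prob_space M by (rule assms(1))
  note ind = assms(2)
  have rvX[measurable]: "X k \<in> borel_measurable M" if "k \<ge> 1" for k
    using ind that unfolding indep_vars_def by auto
  define X' where "X' k \<omega> = (if k = 0 then X 0 \<omega> else max (X k \<omega>) 0)" for k \<omega>
  have ind': "indep_vars (\<lambda>_. borel) X' {1..}"
  proof -
    have "indep_vars (\<lambda>_. borel) (\<lambda>k \<omega>. (\<lambda>x::real. max x 0) (X k \<omega>)) {1..}"
      by (rule indep_vars_compose2[OF ind]) auto
    then show ?thesis by (rule indep_vars_cong[THEN iffD1, rotated -1]) (auto simp: X'_def fun_eq_iff)
  qed
  have ident': "distr M borel (X' k) = distr M borel (X' 1)" if k: "k \<ge> 1" for k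
  proof -
    have eq: "X' j = (\<lambda>x::real. max x 0) \<circ> X j" if "j \<ge> 1" for j using that by (auto simp: X'_def fun_eq_iff)
    have eq1: "X' 1 = (\<lambda>x::real. max x 0) \<circ> X 1" using eq[of 1] by simp
    have "distr M borel (X' k) = distr (distr M borel (X k)) borel (\<lambda>x::real. max x 0)"
      unfolding eq[OF k] using k by (subst distr_distr) auto
    also have "\<dots> = distr (distr M borel (X 1)) borel (\<lambda>x::real. max x 0)" using assms(3)[OF k] by simp
    also have "\<dots> = distr M borel (X' 1)" unfolding eq1 by (subst distr_distr) auto
    finally show ?thesis .
  qed
  have nonneg': "0 \<le> X' k \<omega>" if "k \<ge> 1" for k \<omega> using that by (simp add: X'_def)
  have integ': "integrable M (X' 1)"
  proof (rule Bochner_Integration.integrable_bound[OF assms(5)])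
    show "X' 1 \<in> borel_measurable M" unfolding X'_def by simp
    show "AE \<omega> in M. norm (X' 1 \<omega>) \<le> norm (X 1 \<omega>)" by (auto simp: X'_def)
  qed
  interpret L: iidseq M X'
  proof (unfold_locales)
    show "indep_vars (\<lambda>_. borel) X' {1..}" by (rule ind')
    show "distr M borel (X' k) = distr M borel (X' 1)" if "1 \<le> k" for k by (rule ident'[OF that])
    show "0 \<le> X' k \<omega>" if "1 \<le> k" for k \<omega> by (rule nonneg'[OF that])
    show "integrable M (X' 1)" by (rule integ')
  qed
  have AEeq: "AE \<omega> in M. \<forall>k. X' k \<omega> = X k \<omega>"
    unfolding AE_all_countable
  proof
    fix k :: nat
    show "AE \<omega> in M. X' k \<omega> = X k \<omega>"
    proof (cases "k = 0")
      case True then show ?thesis by (simp add: X'_def)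
    next
      case False
      then have "k \<ge> 1" by simp
      from assms(4)[OF this] show ?thesis by eventually_elim (use False in \<open>auto simp: X'_def\<close>)
    qed
  qed
  have AEfun: "AE \<omega> in M. (\<lambda>k. X' k \<omega>) = (\<lambda>k. X k \<omega>)" using AEeq by (simp add: fun_eq_iff)
  have X'1m: "X' 1 \<in> borel_measurable M" unfolding X'_def by simp
  have X'm: "X' k \<in> borel_measurable M" if "k \<ge> 1" for k using that unfolding X'_def by (auto intro: rvX)
  have E1: "expectation (X' 1) = expectation (X 1)"
    by (rule integral_cong_AE) (use AEeq in auto)
  have E2: "expectation (\<lambda>\<omega>. X' 1 \<omega> - Min ((\<lambda>k. X' k \<omega>) ` {1..m})) = expectation (\<lambda>\<omega>. X 1 \<omega> - Min ((\<lambda>k. X k \<omega>) ` {1..m}))"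
  proof (rule integral_cong_AE)
    show "(\<lambda>\<omega>. X' 1 \<omega> - Min ((\<lambda>k. X' k \<omega>) ` {1..m})) \<in> borel_measurable M"
      by (intro borel_measurable_diff borel_measurable_Min X'm) auto
    show "(\<lambda>\<omega>. X 1 \<omega> - Min ((\<lambda>k. X k \<omega>) ` {1..m})) \<in> borel_measurable M"
      by (intro borel_measurable_diff borel_measurable_Min rvX) auto
    show "AE \<omega> in M. X' 1 \<omega> - Min ((\<lambda>k. X' k \<omega>) ` {1..m}) = X 1 \<omega> - Min ((\<lambda>k. X k \<omega>) ` {1..m})"
      using AEfun by eventually_elim (simp add: fun_eq_iff)
  qed
  have E3: "expectation (\<lambda>\<omega>. Max ((\<lambda>k. X' k \<omega>) ` {1..m}) - X' 1 \<omega>) = expectation (\<lambda>\<omega>. Max ((\<lambda>k. X k \<omega>) ` {1..m}) - X 1 \<omega>)"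
  proof (rule integral_cong_AE)
    show "(\<lambda>\<omega>. Max ((\<lambda>k. X' k \<omega>) ` {1..m}) - X' 1 \<omega>) \<in> borel_measurable M"
      by (intro borel_measurable_diff borel_measurable_Max X'm) auto
    show "(\<lambda>\<omega>. Max ((\<lambda>k. X k \<omega>) ` {1..m}) - X 1 \<omega>) \<in> borel_measurable M"
      by (intro borel_measurable_diff borel_measurable_Max rvX) auto
    show "AE \<omega> in M. Max ((\<lambda>k. X' k \<omega>) ` {1..m}) - X' 1 \<omega> = Max ((\<lambda>k. X k \<omega>) ` {1..m}) - X 1 \<omega>"
      using AEfun by eventually_elim (simp add: fun_eq_iff)
  qed
  have mu': "expectation (X' 1) > 0" using assms(6) E1 by simp
  note main = L.main_locale[OF assms(7) assms(8) mu']
  show ?thesis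
  proof
    show "AE \<omega> in M. (\<lambda>n. IG_min_hat m i (\<lambda>k. X k \<omega>) n) \<longlonglongrightarrow>
            expectation (\<lambda>\<omega>. X 1 \<omega> - Min ((\<lambda>k. X k \<omega>) ` {1..m})) / (real m * expectation (X 1))"
      using conjunct1[OF main] AEfun unfolding E1 E2 by eventually_elim simp
    show "AE \<omega> in M. (\<lambda>n. IG_max_hat m i (\<lambda>k. X k \<omega>) n) \<longlonglongrightarrow>
            expectation (\<lambda>\<omega>. Max ((\<lambda>k. X k \<omega>) ` {1..m}) - X 1 \<omega>) / (real m * expectation (X 1))"
      using conjunct2[OF main] AEfun unfolding E1 E3 by eventually_elim simp
  qed
qed


end
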